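(* Let $Q\subset\mathbb{R}^2$ be a compact convex polygon, centrally symmetric about the origin with nonempty interior, $L=\partial Q$, and consider the CC metric $d_{CC}$ on $H(\mathbb{R})$ induced by $\|\cdot\|_L$. Fix $(x,y)\in\mathbb{R}^2$. Then the function $t\mapsto d_{CC}((x,y,t),{\sf 0})$ on $[0,\infty)$ is continuous, and there is $T(x,y)\ge0$ such that it is constant on $[0,T(x,y)]$ and strictly increasing on $[T(x,y),\infty)$.
   Context: Exponential coordinates on $H(\mathbb{R})$: $(x,y,z)(x',y',z')=(x+x',y+y',z+z'+\tfrac12(xy'-yx'))$, ${\sf 0}=(0,0,0)$. $\|\cdot\|_L$ is the norm with unit ball $Q$; $d_{CC}({\sf p},{\sf q})$ is the infimum over admissible curves ($\gamma_3'=\tfrac12(\gamma_1\gamma_2'-\gamma_2\gamma_1')$) from ${\sf p}$ to ${\sf q}$ of the $\|\cdot\|_L$-length of their projection to the $(x,y)$-plane. *)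

theory Defs
  imports "HOL-Analysis.Analysis"
begin

text \<open>Points of the Heisenberg group in exponential coordinates: triples (x,y,z).\<close>

definition normL :: "(real \<times> real) set \<Rightarrow> real \<times> real \<Rightarrow> real" where
  "normL Q v = Inf {r. 0 < r \<and> v \<in> (\<lambda>q. r *\<^sub>R q) ` Q}"

definition proj_xy :: "real \<times> real \<times> real \<Rightarrow> real \<times> real" where
  "proj_xy p = (fst p, fst (snd p))"

definition admissible :: "(real \<Rightarrow> real \<times> real \<times> real) \<Rightarrow> bool" where
  "admissible \<gamma> \<longleftrightarrow>
     (\<exists>B. \<forall>s\<in>{0..1}. \<forall>t\<in>{0..1}. norm (\<gamma> s - \<gamma> t) \<le> B * \<bar>s - t\<bar>) \<and>
     (AE s in lebesgue. s \<in> {0..1} \<longrightarrow>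
        (\<exists>D. (\<gamma> has_vector_derivative D) (at s within {0..1}) \<and>
             snd (snd D) = (1/2) * (fst (\<gamma> s) * fst (snd D) - fst (snd (\<gamma> s)) * fst D)))"

definition lengthL :: "(real \<times> real) set \<Rightarrow> (real \<Rightarrow> real \<times> real \<times> real) \<Rightarrow> real" where
  "lengthL Q \<gamma> = Sup {(\<Sum>i<n. normL Q (proj_xy (\<gamma> (t (Suc i))) - proj_xy (\<gamma> (t i)))) | n t.
        t 0 = 0 \<and> t n = 1 \<and> (\<forall>i<n. t i \<le> t (Suc i))}"

definition dCC :: "(real \<times> real) set \<Rightarrow> real \<times> real \<times> real \<Rightarrow> real \<times> real \<times> real \<Rightarrow> real" where
  "dCC Q p q = Inf {lengthL Q \<gamma> | \<gamma>. admissible \<gamma> \<and> \<gamma> 0 = p \<and> \<gamma> 1 = q}"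

end

theory Submission
  imports Defs "HOL-Analysis.Analysis"
begin


definition AQ :: "(real\<times>real) set \<Rightarrow> real\<times>real \<Rightarrow> real set" where
  "AQ Q v = {r. 0 < r \<and> v \<in> (\<lambda>q. r *\<^sub>R q) ` Q}"

lemma normL_AQ: "normL Q v = Inf (AQ Q v)" by (simp add: normL_def AQ_def)

locale QL =
  fixes Q :: "(real\<times>real) set" and \<rho> R :: real
  assumes rho: "0 < \<rho>" and ballQ: "cball 0 \<rho> \<subseteq> Q" and QR: "Q \<subseteq> cball 0 R"
    and cvx: "convex Q"
begin

lemma Q0: "0 \<in> Q" using ballQ rho by auto

lemma R_pos: "0 < R" using QR ballQ rho
proof -
  have "(\<rho>, 0) \<in> Q" using ballQ rho by auto
  then have "norm (\<rho>, 0::real) \<le> R" using QR by auto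
  then show ?thesis using rho by simp
qed

lemma AQ_up: assumes "r \<in> AQ Q v" "r \<le> r'" shows "r' \<in> AQ Q v"
proof -
  from assms obtain q where q: "q \<in> Q" "v = r *\<^sub>R q" "0 < r" by (auto simp: AQ_def)
  have "(r / r') *\<^sub>R q + (1 - r/r') *\<^sub>R 0 \<in> Q"
    using q Q0 assms by (intro cvx[unfolded convex_def, rule_format]) (auto simp: field_simps)
  then have "(r / r') *\<^sub>R q \<in> Q" by simp
  moreover have "v = r' *\<^sub>R ((r / r') *\<^sub>R q)" using q assms by auto
  ultimately show ?thesis using q assms by (force simp: AQ_def)
qed

lemma AQ_witness: "\<And>r. r > norm v / \<rho> \<Longrightarrow> r \<in> AQ Q v"
proof -
  fix r assume r: "r > norm v / \<rho>"
  have rp: "r > 0" using r rho by (smt (verit) divide_nonneg_pos norm_ge_zero)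
  have "norm ((1/r) *\<^sub>R v) \<le> \<rho>" using r rp rho by (simp add: field_simps)
  then have "(1/r) *\<^sub>R v \<in> Q" using ballQ by auto
  moreover have "v = r *\<^sub>R ((1/r) *\<^sub>R v)" using rp by simp
  ultimately show "r \<in> AQ Q v" using rp by (force simp: AQ_def)
qed

lemma AQ_ne: "AQ Q v \<noteq> {}" using AQ_witness[where r="norm v / \<rho> + 1" and v=v] by auto

lemma AQ_lower: "r \<in> AQ Q v \<Longrightarrow> norm v / R \<le> r"
proof -
  assume "r \<in> AQ Q v"
  then obtain q where q: "q \<in> Q" "v = r *\<^sub>R q" "0 < r" by (auto simp: AQ_def)
  have "norm q \<le> R" using q QR by auto
  then have "norm v \<le> r * R" using q by (simp add: mult_left_mono)
  then show "norm v / R \<le> r" using R_pos by (simp add: field_simps)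
qed

lemma AQ_bdd: "bdd_below (AQ Q v)" using AQ_lower[of _ v] by (intro bdd_belowI) auto

lemma normL_lower: "norm v / R \<le> normL Q v"
  unfolding normL_AQ using AQ_ne AQ_lower by (intro cInf_greatest) auto

lemma normL_nonneg: "0 \<le> normL Q v"
  using normL_lower[of v] R_pos by (smt (verit) divide_nonneg_pos norm_ge_zero)

lemma normL_upper: "normL Q v \<le> norm v / \<rho>"
proof (rule field_le_epsilon)
  fix e :: real assume e: "0 < e"
  have "normL Q v \<le> norm v / \<rho> + e"
    unfolding normL_AQ using AQ_witness[where r="norm v / \<rho> + e" and v=v] e AQ_bdd by (intro cInf_lower) auto
  then show "normL Q v \<le> norm v / \<rho> + e" .
qed

lemma normL_le_AQ: "r \<in> AQ Q v \<Longrightarrow> normL Q v \<le> r"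
  unfolding normL_AQ using AQ_bdd cInf_lower by blast

lemma normL_scale_le: assumes "0 \<le> c" shows "normL Q (c *\<^sub>R v) \<le> c * normL Q v"
proof (cases "c = 0")
  case True
  then show ?thesis using normL_upper[of 0] by simp
next
  case False
  then have cp: "c > 0" using assms by simp
  have "normL Q (c *\<^sub>R v) / c \<le> normL Q v"
    unfolding normL_AQ[of Q v]
  proof (rule cInf_greatest[OF AQ_ne])
    fix r assume r: "r \<in> AQ Q v"
    then obtain q where q: "q \<in> Q" "v = r *\<^sub>R q" "0 < r" by (auto simp: AQ_def)
    have "c * r \<in> AQ Q (c *\<^sub>R v)" using q cp by (force simp: AQ_def)
    then have "normL Q (c *\<^sub>R v) \<le> c * r" by (rule normL_le_AQ)
    then show "normL Q (c *\<^sub>R v) / c \<le> r" using cp by (simp add: field_simps)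
  qed
  then show ?thesis using cp by (simp add: field_simps)
qed

lemma normL_add: "normL Q (a + b) \<le> normL Q a + normL Q b"
proof -
  have "normL Q (a + b) - normL Q b \<le> normL Q a"
    unfolding normL_AQ[of Q a]
  proof (rule cInf_greatest[OF AQ_ne])
    fix r1 assume r1: "r1 \<in> AQ Q a"
    have "normL Q (a + b) - r1 \<le> normL Q b"
      unfolding normL_AQ[of Q b]
    proof (rule cInf_greatest[OF AQ_ne])
      fix r2 assume r2: "r2 \<in> AQ Q b"
      obtain q1 where q1: "q1 \<in> Q" "a = r1 *\<^sub>R q1" "0 < r1" using r1 by (auto simp: AQ_def)
      obtain q2 where q2: "q2 \<in> Q" "b = r2 *\<^sub>R q2" "0 < r2" using r2 by (auto simp: AQ_def)
      have "(r1/(r1+r2)) *\<^sub>R q1 + (r2/(r1+r2)) *\<^sub>R q2 \<in> Q"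
        using q1 q2 by (intro cvx[unfolded convex_def, rule_format]) (auto simp: divide_simps add_pos_pos)
      moreover have "a + b = (r1+r2) *\<^sub>R ((r1/(r1+r2)) *\<^sub>R q1 + (r2/(r1+r2)) *\<^sub>R q2)"
        using q1 q2 by (simp add: scaleR_add_right)
      ultimately have "r1 + r2 \<in> AQ Q (a + b)" using q1 q2 unfolding AQ_def
        by (smt (verit, ccfv_SIG) image_iff mem_Collect_eq)
      then have "normL Q (a + b) \<le> r1 + r2" by (rule normL_le_AQ)
      then show "normL Q (a + b) - r1 \<le> r2" by simp
    qed
    then show "normL Q (a + b) - normL Q b \<le> r1" by simp
  qed
  then show ?thesis by simp
qed

end


definition part :: "nat \<Rightarrow> (nat \<Rightarrow> real) \<Rightarrow> bool" where
  "part n t \<longleftrightarrow> t 0 = 0 \<and> t n = 1 \<and> (\<forall>i<n. t i \<le> t (Suc i))"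

definition psum :: "(real\<times>real) set \<Rightarrow> (real \<Rightarrow> real\<times>real) \<Rightarrow> nat \<Rightarrow> (nat \<Rightarrow> real) \<Rightarrow> real" where
  "psum Q c n t = (\<Sum>i<n. normL Q (c (t (Suc i)) - c (t i)))"

definition LS :: "(real\<times>real) set \<Rightarrow> (real \<Rightarrow> real\<times>real) \<Rightarrow> real set" where
  "LS Q c = {psum Q c n t | n t. part n t}"

lemma lengthL_LS: "lengthL Q \<gamma> = Sup (LS Q (\<lambda>u. proj_xy (\<gamma> u)))"
  unfolding lengthL_def LS_def psum_def part_def by simp

lemma part_mono: assumes "part n t" "i \<le> j" "j \<le> n" shows "t i \<le> t j"
  using assms(2,3)
proof (induction j)
  case 0 then show ?case by simp
next
  case (Suc j)
  show ?case
  proof (cases "i = Suc j")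
    case True then show ?thesis by simp
  next
    case False
    then have "t i \<le> t j" using Suc by simp
    also have "t j \<le> t (Suc j)" using assms(1) Suc.prems unfolding part_def by simp
    finally show ?thesis .
  qed
qed

lemma part_range: assumes "part n t" "i \<le> n" shows "0 \<le> t i" "t i \<le> 1"
  using part_mono[OF assms(1), of 0 i] part_mono[OF assms(1), of i n] assms unfolding part_def by auto

lemma part_tele: assumes "part n t" shows "(\<Sum>i<n. (t (Suc i) - t i)) = 1"
  using assms by (simp add: sum_lessThan_telescope part_def)

lemma part1: "part 1 (\<lambda>i. if i = 0 then 0 else 1)" by (simp add: part_def)

lemma norm_proj_le: "norm (proj_xy a - proj_xy b) \<le> norm (a - b)"
proof -
  obtain a1 a2 a3 b1 b2 b3 where a: "a = (a1,a2,a3)" and b: "b = (b1,b2,b3)" by (cases a, cases b) auto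
  have "sqrt ((a1-b1)^2 + (a2-b2)^2) \<le> sqrt ((a1-b1)^2 + (sqrt ((a2-b2)^2 + (a3-b3)^2))^2)"
    by (simp add: real_sqrt_le_mono)
  then show ?thesis by (simp add: a b proj_xy_def norm_Pair)
qed

definition lipB :: "real \<Rightarrow> (real \<Rightarrow> 'a::real_normed_vector) \<Rightarrow> bool" where
  "lipB B f \<longleftrightarrow> (\<forall>s\<in>{0..1}. \<forall>t\<in>{0..1}. norm (f s - f t) \<le> B * \<bar>s - t\<bar>)"

lemma lipB_proj: "lipB B \<gamma> \<Longrightarrow> lipB B (\<lambda>u. proj_xy (\<gamma> u))"
  unfolding lipB_def using norm_proj_le order_trans by blast

context QL begin

lemma psum_bound: assumes "lipB B c" "part n t" shows "psum Q c n t \<le> B / \<rho>"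
proof -
  have "psum Q c n t \<le> (\<Sum>i<n. B * (t (Suc i) - t i) / \<rho>)"
    unfolding psum_def
  proof (rule sum_mono)
    fix i assume i: "i \<in> {..<n}"
    have r: "0 \<le> t i" "t i \<le> 1" "0 \<le> t (Suc i)" "t (Suc i) \<le> 1" "t i \<le> t (Suc i)"
      using part_range[OF assms(2)] i assms(2) by (auto simp: part_def)
    have "normL Q (c (t (Suc i)) - c (t i)) \<le> norm (c (t (Suc i)) - c (t i)) / \<rho>" by (rule normL_upper)
    also have "\<dots> \<le> B * \<bar>t (Suc i) - t i\<bar> / \<rho>"
    proof (rule divide_right_mono)
      have "norm (c (t (Suc i)) - c (t i)) \<le> B * \<bar>t (Suc i) - t i\<bar>"
        using assms(1) r unfolding lipB_def by (meson atLeastAtMost_iff order_trans)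
      then show "norm (c (t (Suc i)) - c (t i)) \<le> B * \<bar>t (Suc i) - t i\<bar>" .
    qed (use rho in auto)
    finally show "normL Q (c (t (Suc i)) - c (t i)) \<le> B * (t (Suc i) - t i) / \<rho>" using r by simp
  qed
  also have "\<dots> = B / \<rho> * (\<Sum>i<n. (t (Suc i) - t i))" by (simp add: sum_distrib_left)
  also have "\<dots> = B / \<rho>" using part_tele[OF assms(2)] by simp
  finally show ?thesis .
qed

lemma LS_ne: "LS Q c \<noteq> {}" unfolding LS_def using part1 by blast

lemma LS_bdd: "lipB B c \<Longrightarrow> bdd_above (LS Q c)"
  unfolding LS_def using psum_bound by (intro bdd_aboveI[where M="B/\<rho>"]) blast

lemma psum_le_length: assumes "lipB B \<gamma>" "part n t"
  shows "psum Q (\<lambda>u. proj_xy (\<gamma> u)) n t \<le> lengthL Q \<gamma>"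
  unfolding lengthL_LS using assms LS_bdd[OF lipB_proj[OF assms(1)]]
  by (intro cSup_upper) (auto simp: LS_def)

lemma length_le: assumes "\<And>n t. part n t \<Longrightarrow> psum Q (\<lambda>u. proj_xy (\<gamma> u)) n t \<le> M"
  shows "lengthL Q \<gamma> \<le> M"
  unfolding lengthL_LS using assms LS_ne by (intro cSup_least) (auto simp: LS_def)

lemma length_ge_ends: assumes "lipB B \<gamma>"
  shows "normL Q (proj_xy (\<gamma> 1) - proj_xy (\<gamma> 0)) \<le> lengthL Q \<gamma>"
  using psum_le_length[OF assms part1] by (simp add: psum_def)

lemma length_ge_mid: assumes "lipB B \<gamma>" "0 \<le> u" "u \<le> 1"
  shows "normL Q (proj_xy (\<gamma> u) - proj_xy (\<gamma> 0)) \<le> lengthL Q \<gamma>"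
proof -
  let ?t = "\<lambda>i::nat. if i = 0 then 0 else if i = 1 then u else (1::real)"
  have p: "part 2 ?t" using assms by (simp add: part_def)
  have "psum Q (\<lambda>u. proj_xy (\<gamma> u)) 2 ?t = normL Q (proj_xy (\<gamma> u) - proj_xy (\<gamma> 0)) + normL Q (proj_xy (\<gamma> 1) - proj_xy (\<gamma> u))"
    by (simp add: psum_def numeral_2_eq_2)
  then show ?thesis using psum_le_length[OF assms(1) p] normL_nonneg[of "proj_xy (\<gamma> 1) - proj_xy (\<gamma> u)"] by linarith
qed

end


lemma mvi_core:
  fixes h :: "real \<Rightarrow> real"
  assumes ab: "a \<le> b" and cont: "continuous_on {a..b} h"
    and neg: "negligible (h ` ({a..b} \<inter> N))"
    and der: "\<And>u. u \<in> {a..b} \<Longrightarrow> u \<notin> N \<Longrightarrow> \<exists>D. (h has_real_derivative D) (at u within {a..b}) \<and> D < 0"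
  shows "h b \<le> h a"
proof (rule ccontr)
  assume "\<not> h b \<le> h a"
  then have hab: "h a < h b" by simp
  have "\<not> negligible {h a<..<h b}" using hab by (intro open_not_negligible) auto
  then obtain y where y: "y \<in> {h a<..<h b}" "y \<notin> h ` ({a..b} \<inter> N)"
    using neg negligible_subset by blast
  define S where "S = {u \<in> {a..b}. h u = y}"
  have clS: "closed S" unfolding S_def by (intro continuous_closed_preimage_constant cont) auto
  have neS: "S \<noteq> {}" using IVT'[of h a y b] y ab cont by (auto simp: S_def)
  have bdS: "bdd_above S" unfolding S_def by (auto intro: bdd_aboveI[where M=b])
  define u where "u = Sup S"
  have uS: "u \<in> S" unfolding u_def using closed_contains_Sup[OF neS bdS clS] .
  then have ua: "a \<le> u" "u \<le> b" "h u = y" by (auto simp: S_def)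
  have ub: "u < b" using ua y by (cases "u = b") auto
  have uN: "u \<notin> N" using ua y by auto
  have above: "h v > y" if uv: "u < v" "v \<le> b" for v
  proof (rule ccontr)
    assume "\<not> h v > y"
    then have "h v \<le> y" by simp
    moreover have "continuous_on {v..b} h" by (rule continuous_on_subset[OF cont]) (use ua that in auto)
    ultimately obtain w where w: "v \<le> w" "w \<le> b" "h w = y" using IVT'[of h v y b] y uv by auto
    then have "w \<in> S" using ua uv by (auto simp: S_def)
    then have "w \<le> u" unfolding u_def using bdS by (rule cSup_upper)
    then show False using w uv by simp
  qed
  obtain D where D: "(h has_real_derivative D) (at u within {a..b})" "D < 0"
    using der[of u] ua uN by auto
  have "(h has_real_derivative D) (at u within {u..b})"
    by (rule DERIV_subset[OF D(1)]) (use ua in auto)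
  then have lim: "((\<lambda>v. (h v - h u) / (v - u)) \<longlongrightarrow> D) (at_right u)"
    using ub by (simp add: has_field_derivative_iff at_within_Icc_at_right)
  have ev: "\<forall>\<^sub>F v in at_right u. 0 \<le> (h v - h u) / (v - u)"
    unfolding eventually_at_right[OF ub]
    using above ua ub by (intro exI[where x=b]) (auto intro!: divide_nonneg_pos less_imp_le)
  have "0 \<le> D" using tendsto_lowerbound[OF lim ev] trivial_limit_at_right_real by blast
  then show False using D by simp
qed

lemma lip_neg_image:
  fixes h :: "real \<Rightarrow> real"
  assumes N: "negligible N" and lip: "\<And>x y. x \<in> N \<Longrightarrow> y \<in> N \<Longrightarrow> \<bar>h y - h x\<bar> \<le> L * \<bar>y - x\<bar>"
  shows "negligible (h ` N)"
proof (rule negligible_locally_Lipschitz_image)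
  show "negligible N" by (rule N)
  fix x assume x: "x \<in> N"
  show "\<exists>T B. open T \<and> x \<in> T \<and> (\<forall>y\<in>N \<inter> T. norm (h y - h x) \<le> B * norm (y - x))"
    using lip x by (intro exI[where x=UNIV] exI[where x=L]) auto
qed simp

lemma lip_cont:
  fixes g :: "real \<Rightarrow> real"
  assumes lip: "\<And>s t. s \<in> S \<Longrightarrow> t \<in> S \<Longrightarrow> \<bar>g s - g t\<bar> \<le> K * \<bar>s - t\<bar>"
  shows "continuous_on S g"
  unfolding continuous_on_iff
proof (intro ballI allI impI)
  fix x and \<epsilon> :: real assume x: "x \<in> S" and ep: "0 < \<epsilon>"
  show "\<exists>d>0. \<forall>x'\<in>S. dist x' x < d \<longrightarrow> dist (g x') (g x) < \<epsilon>"
  proof (intro exI[where x="\<epsilon> / (\<bar>K\<bar> + 1)"] conjI ballI impI)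
    show "0 < \<epsilon> / (\<bar>K\<bar> + 1)" using ep by simp
    fix x' assume x': "x' \<in> S" and d: "dist x' x < \<epsilon> / (\<bar>K\<bar> + 1)"
    have "dist (g x') (g x) \<le> K * dist x' x" using lip[OF x' x] by (simp add: dist_real_def)
    also have "\<dots> \<le> (\<bar>K\<bar>+1) * dist x' x" by (simp add: mult_right_mono)
    also have "\<dots> < \<epsilon>" using d by (simp add: field_simps)
    finally show "dist (g x') (g x) < \<epsilon>" .
  qed
qed

lemma ae_mvi_half:
  fixes g :: "real \<Rightarrow> real"
  assumes ab: "a \<le> b" and lip: "\<And>s t. s \<in> {a..b} \<Longrightarrow> t \<in> {a..b} \<Longrightarrow> \<bar>g s - g t\<bar> \<le> K * \<bar>s - t\<bar>"
    and N: "negligible N"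
    and der: "\<And>u. u \<in> {a..b} \<Longrightarrow> u \<notin> N \<Longrightarrow> \<exists>D. (g has_real_derivative D) (at u within {a..b}) \<and> D \<le> M"
    and e: "e > 0"
  shows "g b - g a \<le> (M + e) * (b - a)"
proof -
  define h where "h u = g u - (M + e) * u" for u
  have "h b \<le> h a"
  proof (rule mvi_core[OF ab])
    show "continuous_on {a..b} h" unfolding h_def by (intro continuous_intros lip_cont[OF lip]) auto
    show "negligible (h ` ({a..b} \<inter> N))"
    proof (rule lip_neg_image)
      show "negligible ({a..b} \<inter> N)" by (rule negligible_subset[OF N]) auto
      fix x y assume xy: "x \<in> {a..b} \<inter> N" "y \<in> {a..b} \<inter> N"
      have "\<bar>h y - h x\<bar> = \<bar>(g y - g x) - (M + e) * (y - x)\<bar>" by (simp add: h_def algebra_simps)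
      also have "\<dots> \<le> \<bar>g y - g x\<bar> + \<bar>M + e\<bar> * \<bar>y - x\<bar>"
        using abs_triangle_ineq4[of "g y - g x" "(M + e) * (y - x)"] by (simp add: abs_mult)
      also have "\<dots> \<le> \<bar>K\<bar> * \<bar>y - x\<bar> + \<bar>M + e\<bar> * \<bar>y - x\<bar>"
      proof -
        have "\<bar>g y - g x\<bar> \<le> K * \<bar>y - x\<bar>" using lip[of y x] xy by auto
        also have "\<dots> \<le> \<bar>K\<bar> * \<bar>y - x\<bar>" by (simp add: mult_right_mono)
        finally show ?thesis by simp
      qed
      finally show "\<bar>h y - h x\<bar> \<le> (\<bar>K\<bar> + \<bar>M + e\<bar>) * \<bar>y - x\<bar>" by (simp add: algebra_simps)
    qed
    fix u assume "u \<in> {a..b}" "u \<notin> N"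
    then obtain D where D: "(g has_real_derivative D) (at u within {a..b})" "D \<le> M" using der by blast
    have "((\<lambda>u. g u - (M + e) * u) has_real_derivative D - (M + e) * 1) (at u within {a..b})"
      by (intro DERIV_diff D(1) DERIV_cmult DERIV_ident)
    then have "(h has_real_derivative D - (M + e)) (at u within {a..b})"
      unfolding h_def[abs_def] by simp
    then show "\<exists>D. (h has_real_derivative D) (at u within {a..b}) \<and> D < 0" using D(2) e by (intro exI[of _ "D - (M+e)"]) auto
  qed
  then show ?thesis by (simp add: h_def algebra_simps)
qed

lemma ae_mvi_half':
  fixes g :: "real \<Rightarrow> real"
  assumes ab: "a \<le> b" and lip: "\<And>s t. s \<in> {a..b} \<Longrightarrow> t \<in> {a..b} \<Longrightarrow> \<bar>g s - g t\<bar> \<le> K * \<bar>s - t\<bar>"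
    and N: "negligible N"
    and der: "\<And>u. u \<in> {a..b} \<Longrightarrow> u \<notin> N \<Longrightarrow> \<exists>D. (g has_real_derivative D) (at u within {a..b}) \<and> D \<le> M"
  shows "g b - g a \<le> M * (b - a)"
proof (rule field_le_epsilon)
  fix e :: real assume e: "0 < e"
  show "g b - g a \<le> M * (b - a) + e"
  proof (cases "a < b")
    case True
    have "g b - g a \<le> (M + e/(b-a)) * (b - a)" using ae_mvi_half[OF ab lip N der, of "e/(b-a)"] e True by simp
    also have "(M + e/(b-a)) * (b - a) = M * (b - a) + e" using True by (simp add: field_simps)
    finally show ?thesis .
  next
    case False then have "a = b" using ab by simp
    then show ?thesis using e by simp
  qed
qed

lemma ae_mvi:
  fixes g :: "real \<Rightarrow> real"
  assumes ab: "a \<le> b" and lip: "\<And>s t. s \<in> {a..b} \<Longrightarrow> t \<in> {a..b} \<Longrightarrow> \<bar>g s - g t\<bar> \<le> K * \<bar>s - t\<bar>"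
    and N: "negligible N"
    and der: "\<And>u. u \<in> {a..b} \<Longrightarrow> u \<notin> N \<Longrightarrow> \<exists>D. (g has_real_derivative D) (at u within {a..b}) \<and> \<bar>D\<bar> \<le> M"
  shows "\<bar>g b - g a\<bar> \<le> M * (b - a)"
proof -
  have "g b - g a \<le> M * (b - a)"
  proof (rule ae_mvi_half'[OF ab lip N])
    fix u assume "u \<in> {a..b}" "u \<notin> N"
    then obtain D where D: "(g has_real_derivative D) (at u within {a..b})" "\<bar>D\<bar> \<le> M" using der by blast
    then show "\<exists>D. (g has_real_derivative D) (at u within {a..b}) \<and> D \<le> M" by force
  qed
  moreover have "(- g b) - (- g a) \<le> M * (b - a)"
  proof (rule ae_mvi_half'[OF ab _ N])
    show "\<bar>- g s - - g t\<bar> \<le> K * \<bar>s - t\<bar>" if "s \<in> {a..b}" "t \<in> {a..b}" for s t using lip[OF that] by simp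
    fix u assume "u \<in> {a..b}" "u \<notin> N"
    then obtain D where D: "(g has_real_derivative D) (at u within {a..b})" "\<bar>D\<bar> \<le> M" using der by blast
    have "((\<lambda>u. - g u) has_real_derivative - D) (at u within {a..b})" by (intro DERIV_minus D(1))
    then show "\<exists>D. ((\<lambda>u. - g u) has_real_derivative D) (at u within {a..b}) \<and> D \<le> M" using D(2) by force
  qed
  ultimately show ?thesis by simp
qed



definition cr :: "real\<times>real \<Rightarrow> real\<times>real \<Rightarrow> real" where
  "cr a b = fst a * snd b - snd a * fst b"

definition mk :: "(real \<Rightarrow> real\<times>real) \<Rightarrow> (real \<Rightarrow> real) \<Rightarrow> real \<Rightarrow> real\<times>real\<times>real" where
  "mk c z u = (fst (c u), snd (c u), z u)"

lemma norm_pair_sq: "(norm (a::real\<times>real))^2 = (fst a)^2 + (snd a)^2"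
  by (cases a) (simp add: norm_Pair)

lemma cr_bound: "\<bar>cr a b\<bar> \<le> norm a * norm b"
proof -
  have id: "(norm a * norm b)^2 - (cr a b)^2 = (fst a * fst b + snd a * snd b)^2"
    unfolding power_mult_distrib norm_pair_sq cr_def by (simp add: algebra_simps power2_eq_square)
  have "(cr a b)^2 \<le> (norm a * norm b)^2"
    using id zero_le_power2[of "fst a * fst b + snd a * snd b"] by linarith
  then have "(\<bar>cr a b\<bar>)^2 \<le> (norm a * norm b)^2" by simp
  then show ?thesis by (rule power2_le_imp_le) simp
qed

lemma cr_lin: "cr (a + b) c = cr a c + cr b c" "cr a (b + c) = cr a b + cr a c"
  "cr (r *\<^sub>R a) b = r * cr a b" "cr a (r *\<^sub>R b) = r * cr a b" "cr a a = 0"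
  "cr (a - b) c = cr a c - cr b c" "cr a (b - c) = cr a b - cr a c" "cr b a = - cr a b"
  "cr (-a) b = - cr a b" "cr a (-b) = - cr a b"
  by (auto simp: cr_def algebra_simps)

lemma norm3: "norm (mk c z s - mk c z t) \<le> norm (c s - c t) + \<bar>z s - z t\<bar>"
proof -
  define d1 where "d1 = fst (c s) - fst (c t)"
  define d2 where "d2 = snd (c s) - snd (c t)"
  define d3 where "d3 = z s - z t"
  have e1: "mk c z s - mk c z t = (d1, d2, 0) + (0, 0, d3)"
    by (simp add: mk_def d1_def d2_def d3_def)
  have e2: "c s - c t = (d1, d2)" by (simp add: d1_def d2_def prod_eq_iff)
  have "norm (mk c z s - mk c z t) \<le> norm (d1, d2, 0::real) + norm (0::real, 0::real, d3)"
    unfolding e1 by (rule norm_triangle_ineq)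
  also have "norm (d1, d2, 0::real) = norm (d1, d2)" by (simp add: norm_Pair)
  also have "norm (0::real, 0::real, d3) = \<bar>d3\<bar>" by (simp add: norm_Pair)
  finally show ?thesis using e2 d3_def by simp
qed

lemma mk_lip:
  assumes "lipB Bc c" and "\<And>s t. s \<in> {0..1} \<Longrightarrow> t \<in> {0..1} \<Longrightarrow> \<bar>z s - z t\<bar> \<le> Bz * \<bar>s - t\<bar>"
  shows "lipB (Bc + Bz) (mk c z)"
  unfolding lipB_def
proof (intro ballI)
  fix s t :: real assume st: "s \<in> {0..1}" "t \<in> {0..1}"
  have "norm (mk c z s - mk c z t) \<le> norm (c s - c t) + \<bar>z s - z t\<bar>" by (rule norm3)
  also have "\<dots> \<le> Bc * \<bar>s - t\<bar> + Bz * \<bar>s - t\<bar>" using assms st unfolding lipB_def by (meson add_mono)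
  finally show "norm (mk c z s - mk c z t) \<le> (Bc + Bz) * \<bar>s - t\<bar>" by (simp add: algebra_simps)
qed

lemma mk_deriv:
  assumes "(c has_vector_derivative c') (at x within S)" "(z has_real_derivative z') (at x within S)"
  shows "(mk c z has_vector_derivative (fst c', snd c', z')) (at x within S)"
proof -
  have 1: "((\<lambda>u. fst (c u)) has_vector_derivative fst c') (at x within S)"
    using bounded_linear.has_vector_derivative[OF bounded_linear_fst assms(1)] by simp
  have 2: "((\<lambda>u. snd (c u)) has_vector_derivative snd c') (at x within S)"
    using bounded_linear.has_vector_derivative[OF bounded_linear_snd assms(1)] by simp
  have 3: "(z has_vector_derivative z') (at x within S)" using assms(2) by (simp add: has_real_derivative_iff_has_vector_derivative)
  show ?thesis unfolding mk_def[abs_def] by (rule has_vector_derivative_Pair[OF 1 has_vector_derivative_Pair[OF 2 3]])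
qed

lemma adm_mk:
  assumes lipc: "lipB Bc c" and lipz: "\<And>s t. s \<in> {0..1} \<Longrightarrow> t \<in> {0..1} \<Longrightarrow> \<bar>z s - z t\<bar> \<le> Bz * \<bar>s - t\<bar>"
    and ae: "AE s in lebesgue. s \<in> {0..1} \<longrightarrow> (\<exists>c' z'. (c has_vector_derivative c') (at s within {0..1})
        \<and> (z has_real_derivative z') (at s within {0..1}) \<and> z' = cr (c s) c' / 2)"
  shows "admissible (mk c z)"
  unfolding admissible_def
proof
  show "\<exists>B. \<forall>s\<in>{0..1}. \<forall>t\<in>{0..1}. norm (mk c z s - mk c z t) \<le> B * \<bar>s - t\<bar>"
    using mk_lip[OF lipc lipz] unfolding lipB_def by blast
  show "AE s in lebesgue. s \<in> {0..1} \<longrightarrow> (\<exists>D. (mk c z has_vector_derivative D) (at s within {0..1}) \<and>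
             snd (snd D) = 1 / 2 * (fst (mk c z s) * fst (snd D) - fst (snd (mk c z s)) * fst D))"
    using ae
  proof (rule eventually_mono)
    fix s assume h: "s \<in> {0..1} \<longrightarrow> (\<exists>c' z'. (c has_vector_derivative c') (at s within {0..1})
        \<and> (z has_real_derivative z') (at s within {0..1}) \<and> z' = cr (c s) c' / 2)"
    show "s \<in> {0..1} \<longrightarrow> (\<exists>D. (mk c z has_vector_derivative D) (at s within {0..1}) \<and>
             snd (snd D) = 1 / 2 * (fst (mk c z s) * fst (snd D) - fst (snd (mk c z s)) * fst D))"
    proof
      assume "s \<in> {0..1}"
      with h obtain c' z' where d: "(c has_vector_derivative c') (at s within {0..1})"
        "(z has_real_derivative z') (at s within {0..1})" "z' = cr (c s) c' / 2" by blast
      show "\<exists>D. (mk c z has_vector_derivative D) (at s within {0..1}) \<and>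
             snd (snd D) = 1 / 2 * (fst (mk c z s) * fst (snd D) - fst (snd (mk c z s)) * fst D)"
      proof (intro exI[of _ "(fst c', snd c', z')"] conjI)
        show "(mk c z has_vector_derivative (fst c', snd c', z')) (at s within {0..1})" by (rule mk_deriv[OF d(1,2)])
        show "snd (snd (fst c', snd c', z')) = 1 / 2 * (fst (mk c z s) * fst (snd (fst c', snd c', z')) - fst (snd (mk c z s)) * fst (fst c', snd c', z'))"
          using d(3) by (simp add: mk_def cr_def)
      qed
    qed
  qed
qed

lemma adm_dest:
  assumes "admissible \<gamma>"
  obtains B N where "lipB B \<gamma>" "negligible N"
    "\<And>s. s \<in> {0..1} \<Longrightarrow> s \<notin> N \<Longrightarrow> \<exists>c' z'. ((\<lambda>u. proj_xy (\<gamma> u)) has_vector_derivative c') (at s within {0..1})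
        \<and> ((\<lambda>u. snd (snd (\<gamma> u))) has_real_derivative z') (at s within {0..1}) \<and> z' = cr (proj_xy (\<gamma> s)) c' / 2"
proof -
  from assms obtain B where B: "lipB B \<gamma>" unfolding admissible_def lipB_def by blast
  from assms have ae: "AE s in lebesgue. s \<in> {0..1} \<longrightarrow> (\<exists>D. (\<gamma> has_vector_derivative D) (at s within {0..1}) \<and>
        snd (snd D) = (1/2) * (fst (\<gamma> s) * fst (snd D) - fst (snd (\<gamma> s)) * fst D))"
    unfolding admissible_def by blast
  then obtain N where NN: "{s \<in> space lebesgue. \<not> (s \<in> {0..1} \<longrightarrow> (\<exists>D. (\<gamma> has_vector_derivative D) (at s within {0..1}) \<and>
        snd (snd D) = (1/2) * (fst (\<gamma> s) * fst (snd D) - fst (snd (\<gamma> s)) * fst D)))} \<subseteq> N"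
    and N0: "emeasure lebesgue N = 0" "N \<in> sets lebesgue"
    by (rule AE_E)
  have N: "N \<in> null_sets lebesgue" using N0 by auto
  show ?thesis
  proof (rule that[OF B, of N])
    show "negligible N" using N by (simp add: negligible_iff_null_sets)
    fix s assume s: "s \<in> {0..1}" "s \<notin> N"
    have sp: "s \<in> space lebesgue" by simp
    have "s \<in> {0..1} \<longrightarrow> (\<exists>D. (\<gamma> has_vector_derivative D) (at s within {0..1}) \<and>
        snd (snd D) = (1/2) * (fst (\<gamma> s) * fst (snd D) - fst (snd (\<gamma> s)) * fst D))"
      using NN s(2) sp by blast
    then obtain D where D: "(\<gamma> has_vector_derivative D) (at s within {0..1})"
      "snd (snd D) = (1/2) * (fst (\<gamma> s) * fst (snd D) - fst (snd (\<gamma> s)) * fst D)"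
      using s(1) by blast
    have 1: "((\<lambda>u. fst (\<gamma> u)) has_vector_derivative fst D) (at s within {0..1})"
      using bounded_linear.has_vector_derivative[OF bounded_linear_fst D(1)] by simp
    have 2: "((\<lambda>u. snd (\<gamma> u)) has_vector_derivative snd D) (at s within {0..1})"
      using bounded_linear.has_vector_derivative[OF bounded_linear_snd D(1)] by simp
    have 3: "((\<lambda>u. fst (snd (\<gamma> u))) has_vector_derivative fst (snd D)) (at s within {0..1})"
      using bounded_linear.has_vector_derivative[OF bounded_linear_fst 2] by simp
    have 4: "((\<lambda>u. snd (snd (\<gamma> u))) has_vector_derivative snd (snd D)) (at s within {0..1})"
      using bounded_linear.has_vector_derivative[OF bounded_linear_snd 2] by simp
    have "((\<lambda>u. proj_xy (\<gamma> u)) has_vector_derivative (fst D, fst (snd D))) (at s within {0..1})"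
      unfolding proj_xy_def by (intro has_vector_derivative_Pair 1 3)
    moreover have "((\<lambda>u. snd (snd (\<gamma> u))) has_real_derivative snd (snd D)) (at s within {0..1})"
      using 4 by (simp add: has_real_derivative_iff_has_vector_derivative)
    ultimately show "\<exists>c' z'. ((\<lambda>u. proj_xy (\<gamma> u)) has_vector_derivative c') (at s within {0..1})
        \<and> ((\<lambda>u. snd (snd (\<gamma> u))) has_real_derivative z') (at s within {0..1}) \<and> z' = cr (proj_xy (\<gamma> s)) c' / 2"
      using D(2) by (intro exI conjI) (auto simp: cr_def proj_xy_def)
  qed
qed

lemma mk_proj: "mk (\<lambda>u. proj_xy (\<gamma> u)) (\<lambda>u. snd (snd (\<gamma> u))) = \<gamma>"
  by (auto simp: mk_def proj_xy_def fun_eq_iff)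

lemma proj_mk: "proj_xy (mk c z u) = c u" by (simp add: mk_def proj_xy_def)

lemma AE_from_negligible:
  assumes "negligible N" "\<And>s. s \<notin> N \<Longrightarrow> P s"
  shows "AE s in lebesgue. P s"
  using assms by (intro AE_I'[of N]) (auto simp: negligible_iff_null_sets)



lemma lipB_add: "lipB A f \<Longrightarrow> lipB B g \<Longrightarrow> lipB (A + B) (\<lambda>u. f u + g u)"
  unfolding lipB_def
proof (intro ballI)
  fix s t :: real assume a: "\<forall>s\<in>{0..1}. \<forall>t\<in>{0..1}. norm (f s - f t) \<le> A * \<bar>s - t\<bar>"
    and b: "\<forall>s\<in>{0..1}. \<forall>t\<in>{0..1}. norm (g s - g t) \<le> B * \<bar>s - t\<bar>" and st: "s \<in> {0..1}" "t \<in> {0..1}"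
  have "norm (f s + g s - (f t + g t)) \<le> norm (f s - f t) + norm (g s - g t)"
    by (metis add_diff_add norm_triangle_ineq)
  also have "\<dots> \<le> A * \<bar>s - t\<bar> + B * \<bar>s - t\<bar>" using a b st by (meson add_mono)
  finally show "norm (f s + g s - (f t + g t)) \<le> (A + B) * \<bar>s - t\<bar>" by (simp add: algebra_simps)
qed

lemma lipB_scale: "lipB A f \<Longrightarrow> lipB (\<bar>c\<bar> * A) (\<lambda>u. c *\<^sub>R f u)"
  unfolding lipB_def
proof (intro ballI)
  fix s t :: real assume a: "\<forall>s\<in>{0..1}. \<forall>t\<in>{0..1}. norm (f s - f t) \<le> A * \<bar>s - t\<bar>" and st: "s \<in> {0..1}" "t \<in> {0..1}"
  have "norm (c *\<^sub>R f s - c *\<^sub>R f t) = \<bar>c\<bar> * norm (f s - f t)"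
    by (metis norm_scaleR scaleR_diff_right)
  also have "\<dots> \<le> \<bar>c\<bar> * (A * \<bar>s - t\<bar>)" using a st by (simp add: mult_left_mono)
  finally show "norm (c *\<^sub>R f s - c *\<^sub>R f t) \<le> \<bar>c\<bar> * A * \<bar>s - t\<bar>" by (simp add: algebra_simps)
qed

lemma lipB_scale_real: "lipB A (f::real\<Rightarrow>real) \<Longrightarrow> lipB (\<bar>c\<bar> * A) (\<lambda>u. c * f u)"
  using lipB_scale[of A f c] by simp

lemma lipB_const: "lipB 0 (\<lambda>u. a)" by (simp add: lipB_def)

lemma lipB_mono: "lipB A f \<Longrightarrow> A \<le> B \<Longrightarrow> lipB B f"
  unfolding lipB_def by (meson abs_ge_zero mult_right_mono order_trans)

lemma lipB_cr:
  assumes "lipB La a" "lipB Lb b" "\<And>u. u \<in> {0..1} \<Longrightarrow> norm (a u) \<le> Ma" "\<And>u. u \<in> {0..1} \<Longrightarrow> norm (b u) \<le> Mb"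
  shows "lipB (La * Mb + Ma * Lb) (\<lambda>u. cr (a u) (b u))"
  unfolding lipB_def
proof (intro ballI)
  fix s t :: real assume st: "s \<in> {0..1}" "t \<in> {0..1}"
  have "cr (a s) (b s) - cr (a t) (b t) = cr (a s - a t) (b s) + cr (a t) (b s - b t)"
    by (simp add: cr_def algebra_simps)
  then have "\<bar>cr (a s) (b s) - cr (a t) (b t)\<bar> \<le> \<bar>cr (a s - a t) (b s)\<bar> + \<bar>cr (a t) (b s - b t)\<bar>" by simp
  also have "\<dots> \<le> norm (a s - a t) * norm (b s) + norm (a t) * norm (b s - b t)"
    by (intro add_mono cr_bound)
  also have "\<dots> \<le> (La * \<bar>s - t\<bar>) * Mb + Ma * (Lb * \<bar>s - t\<bar>)"
  proof (rule add_mono)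
    have 1: "norm (a s - a t) \<le> La * \<bar>s - t\<bar>" using assms(1) st unfolding lipB_def by blast
    have 2: "norm (b s) \<le> Mb" using assms(4) st by blast
    show "norm (a s - a t) * norm (b s) \<le> La * \<bar>s - t\<bar> * Mb"
      by (rule mult_mono[OF 1 2]) (use 1 in \<open>auto intro: order_trans[OF norm_ge_zero]\<close>)
    have 3: "norm (b s - b t) \<le> Lb * \<bar>s - t\<bar>" using assms(2) st unfolding lipB_def by blast
    have 4: "norm (a t) \<le> Ma" using assms(3) st by blast
    show "norm (a t) * norm (b s - b t) \<le> Ma * (Lb * \<bar>s - t\<bar>)"
      by (rule mult_mono[OF 4 3]) (use 4 in \<open>auto intro: order_trans[OF norm_ge_zero]\<close>)
  qed
  finally show "norm (cr (a s) (b s) - cr (a t) (b t)) \<le> (La * Mb + Ma * Lb) * \<bar>s - t\<bar>" by (simp add: algebra_simps)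
qed

lemma lipB_cont: fixes f :: "real \<Rightarrow> 'a::real_normed_vector" shows "lipB B f \<Longrightarrow> continuous_on {0..1} f"
  unfolding lipB_def continuous_on_iff
proof (intro ballI allI impI)
  fix x \<epsilon> :: real assume lip: "\<forall>s\<in>{0..1}. \<forall>t\<in>{0..1}. norm (f s - f t) \<le> B * \<bar>s - t\<bar>"
    and x: "x \<in> {0..1}" and ep: "0 < \<epsilon>"
  show "\<exists>d>0. \<forall>x'\<in>{0..1}. dist x' x < d \<longrightarrow> dist (f x') (f x) < \<epsilon>"
  proof (intro exI[where x="\<epsilon> / (\<bar>B\<bar> + 1)"] conjI ballI impI)
    show "0 < \<epsilon> / (\<bar>B\<bar> + 1)" using ep by simp
    fix x' assume x': "x' \<in> {0..1}" and d: "dist x' x < \<epsilon> / (\<bar>B\<bar> + 1)"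
    have "dist (f x') (f x) \<le> B * dist x' x" using lip x' x by (simp add: dist_norm dist_real_def)
    also have "\<dots> \<le> (\<bar>B\<bar>+1) * dist x' x" by (simp add: mult_right_mono)
    also have "\<dots> < \<epsilon>" using d by (simp add: field_simps)
    finally show "dist (f x') (f x) < \<epsilon>" .
  qed
qed

lemma lipB_int:
  fixes h :: "real \<Rightarrow> real"
  assumes cont: "continuous_on {0..1} h" and bd: "\<And>u. u \<in> {0..1} \<Longrightarrow> \<bar>h u\<bar> \<le> M"
  shows "lipB M (\<lambda>u. integral {0..u} h)"
  unfolding lipB_def
proof (intro ballI)
  have key: "\<bar>integral {0..t} h - integral {0..s} h\<bar> \<le> M * (t - s)" if st: "s \<in> {0..1}" "t \<in> {0..1}" "s \<le> t" for s t
  proof -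
    have int: "h integrable_on {0..t}" using cont st by (intro integrable_continuous_real continuous_on_subset[OF cont]) auto
    have "integral {0..s} h + integral {s..t} h = integral {0..t} h"
      using st int by (intro Henstock_Kurzweil_Integration.integral_combine) auto
    then have "integral {0..t} h - integral {0..s} h = integral {s..t} h" by simp
    moreover have "norm (integral {s..t} h) \<le> M * (t - s)"
      using st bd by (intro integral_bound continuous_on_subset[OF cont]) auto
    ultimately show ?thesis by simp
  qed
  fix s t :: real assume st: "s \<in> {0..1}" "t \<in> {0..1}"
  show "norm (integral {0..s} h - integral {0..t} h) \<le> M * \<bar>s - t\<bar>"
  proof (cases "s \<le> t")
    case True then show ?thesis using key[OF st True] by (simp add: abs_minus_commute)
  next
    case False then show ?thesis using key[OF st(2,1)] by simp
  qed
qed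

lemma deriv_lip:
  fixes f :: "real \<Rightarrow> real"
  assumes der: "\<And>x. (f has_real_derivative f' x) (at x)" and bd: "\<And>x. x \<in> {0..1} \<Longrightarrow> \<bar>f' x\<bar> \<le> M"
  shows "lipB M f"
  unfolding lipB_def
proof (intro ballI)
  have key: "\<bar>f t - f s\<bar> \<le> M * (t - s)" if st: "s \<in> {0..1}" "t \<in> {0..1}" "s < t" for s t
  proof -
    obtain z where z: "s < z" "z < t" "f t - f s = (t - s) * f' z" using MVT2[OF st(3)] der by blast
    have "\<bar>f' z\<bar> \<le> M" using bd z st by auto
    then show ?thesis using z st by (simp add: abs_mult mult_right_mono mult.commute)
  qed
  fix s t :: real assume st: "s \<in> {0..1}" "t \<in> {0..1}"
  show "norm (f s - f t) \<le> M * \<bar>s - t\<bar>"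
  proof (cases s t rule: linorder_cases)
    case less then show ?thesis using key[OF st less] by (simp add: abs_minus_commute)
  next
    case greater then show ?thesis using key[OF st(2,1) greater] by simp
  qed simp
qed

lemma lipB_pair:
  assumes "lipB A (f::real\<Rightarrow>real)" "lipB B g" shows "lipB (A + B) (\<lambda>u. (f u, g u))"
  unfolding lipB_def
proof (intro ballI)
  fix s t :: real assume st: "s \<in> {0..1}" "t \<in> {0..1}"
  have "norm ((f s, g s) - (f t, g t)) \<le> norm (f s - f t) + norm (g s - g t)"
    using norm_Pair_le[of "f s - f t" "g s - g t"] by simp
  also have "\<dots> \<le> A * \<bar>s - t\<bar> + B * \<bar>s - t\<bar>" using assms st unfolding lipB_def by (meson add_mono)
  finally show "norm ((f s, g s) - (f t, g t)) \<le> (A + B) * \<bar>s - t\<bar>" by (simp add: algebra_simps)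
qed

lemma lipB_nonneg: "lipB B f \<Longrightarrow> 0 \<le> B"
proof -
  assume "lipB B f"
  then have "norm (f 1 - f 0) \<le> B * \<bar>1 - 0\<bar>" unfolding lipB_def by (metis atLeastAtMost_iff order_refl zero_le_one)
  then have "0 \<le> B * \<bar>1 - 0\<bar>" by (meson norm_ge_zero order_trans)
  then show "0 \<le> B" by simp
qed



definition LIP :: "(real \<Rightarrow> 'a::real_normed_vector) \<Rightarrow> bool" where
  "LIP f \<longleftrightarrow> (\<exists>B. lipB B f)"

lemma lipB_bound: assumes "lipB B f" "u \<in> {0..1}" shows "norm (f u) \<le> norm (f 0) + B"
proof -
  have "norm (f u - f 0) \<le> B * \<bar>u - 0\<bar>" using assms unfolding lipB_def by (meson atLeastAtMost_iff order_refl zero_le_one)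
  also have "\<dots> \<le> B" using assms lipB_nonneg[OF assms(1)] by (simp add: mult_left_le)
  finally show ?thesis by (metis add.commute diff_add_cancel norm_triangle_ineq order_trans add_left_mono)
qed

lemma LIP_bound: "LIP f \<Longrightarrow> \<exists>M. \<forall>u\<in>{0..1}. norm (f u) \<le> M"
  unfolding LIP_def using lipB_bound by blast

lemma LIP_add: "LIP f \<Longrightarrow> LIP g \<Longrightarrow> LIP (\<lambda>u. f u + g u)"
  unfolding LIP_def using lipB_add by blast

lemma LIP_scale: "LIP f \<Longrightarrow> LIP (\<lambda>u. c *\<^sub>R f u)"
  unfolding LIP_def using lipB_scale by blast

lemma LIP_mult_const: "LIP (f::real\<Rightarrow>real) \<Longrightarrow> LIP (\<lambda>u. c * f u)"
  unfolding LIP_def using lipB_scale_real by blast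

lemma LIP_minus: "LIP f \<Longrightarrow> LIP (\<lambda>u. - f u)"
  using LIP_scale[of f "-1"] by simp

lemma LIP_diff: "LIP f \<Longrightarrow> LIP g \<Longrightarrow> LIP (\<lambda>u. f u - g u)"
  using LIP_add[of f "\<lambda>u. - g u"] LIP_minus[of g] by simp

lemma LIP_const: "LIP (\<lambda>u. a)" unfolding LIP_def using lipB_const by blast

lemma LIP_id: "LIP (\<lambda>u::real. u)" unfolding LIP_def lipB_def by (intro exI[of _ 1]) simp

lemma LIP_cr: assumes "LIP a" "LIP b" shows "LIP (\<lambda>u. cr (a u) (b u))"
proof -
  obtain A B where A: "lipB A a" and B: "lipB B b" using assms unfolding LIP_def by blast
  show ?thesis unfolding LIP_def
    using lipB_cr[OF A B lipB_bound[OF A] lipB_bound[OF B]] by blast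
qed

lemma LIP_scaleR: assumes "LIP (f::real\<Rightarrow>real)" "LIP g" shows "LIP (\<lambda>u. f u *\<^sub>R g u)"
proof -
  obtain A B where A: "lipB A f" and B: "lipB B g" using assms unfolding LIP_def by blast
  define Mf where "Mf = norm (f 0) + A"
  define Mg where "Mg = norm (g 0) + B"
  have mf: "\<bar>f u\<bar> \<le> Mf" if "u \<in> {0..1}" for u using lipB_bound[OF A that] by (simp add: Mf_def)
  have mg: "norm (g u) \<le> Mg" if "u \<in> {0..1}" for u using lipB_bound[OF B that] by (simp add: Mg_def)
  have "lipB (A * Mg + Mf * B) (\<lambda>u. f u *\<^sub>R g u)"
    unfolding lipB_def
  proof (intro ballI)
    fix s t :: real assume st: "s \<in> {0..1}" "t \<in> {0..1}"
    have "f s *\<^sub>R g s - f t *\<^sub>R g t = (f s - f t) *\<^sub>R g s + f t *\<^sub>R (g s - g t)"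
      by (simp add: algebra_simps)
    then have "norm (f s *\<^sub>R g s - f t *\<^sub>R g t) \<le> \<bar>f s - f t\<bar> * norm (g s) + \<bar>f t\<bar> * norm (g s - g t)"
      by (metis norm_scaleR norm_triangle_ineq)
    also have "\<dots> \<le> (A * \<bar>s - t\<bar>) * Mg + Mf * (B * \<bar>s - t\<bar>)"
    proof (rule add_mono)
      have 1: "\<bar>f s - f t\<bar> \<le> A * \<bar>s - t\<bar>" using A st unfolding lipB_def by (metis real_norm_def)
      show "\<bar>f s - f t\<bar> * norm (g s) \<le> A * \<bar>s - t\<bar> * Mg"
        by (rule mult_mono[OF 1 mg[OF st(1)]]) (use 1 in \<open>auto intro: order_trans[OF abs_ge_zero]\<close>)
      have 3: "norm (g s - g t) \<le> B * \<bar>s - t\<bar>" using B st unfolding lipB_def by blast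
      show "\<bar>f t\<bar> * norm (g s - g t) \<le> Mf * (B * \<bar>s - t\<bar>)"
        by (rule mult_mono[OF mf[OF st(2)] 3]) (use mf[OF st(2)] in \<open>auto intro: order_trans[OF abs_ge_zero]\<close>)
    qed
    finally show "norm (f s *\<^sub>R g s - f t *\<^sub>R g t) \<le> (A * Mg + Mf * B) * \<bar>s - t\<bar>" by (simp add: algebra_simps)
  qed
  then show ?thesis unfolding LIP_def by blast
qed

lemma LIP_mult: "LIP (f::real\<Rightarrow>real) \<Longrightarrow> LIP g \<Longrightarrow> LIP (\<lambda>u. f u * g u)"
  using LIP_scaleR[of f g] by simp

lemma LIP_pair: "LIP (f::real\<Rightarrow>real) \<Longrightarrow> LIP (g::real\<Rightarrow>real) \<Longrightarrow> LIP (\<lambda>u. (f u, g u))"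
  unfolding LIP_def using lipB_pair by blast

lemma LIP_cont: "LIP f \<Longrightarrow> continuous_on {0..1} f"
  unfolding LIP_def using lipB_cont by blast

lemma LIP_int: assumes "LIP (h::real\<Rightarrow>real)" shows "LIP (\<lambda>u. integral {0..u} h)"
proof -
  obtain M where M: "\<forall>u\<in>{0..1}. norm (h u) \<le> M" using LIP_bound[OF assms] by blast
  show ?thesis unfolding LIP_def
    using lipB_int[OF LIP_cont[OF assms], of M] M by auto
qed

lemma LIP_fst: "LIP f \<Longrightarrow> LIP (\<lambda>u. fst (f u))"
  unfolding LIP_def lipB_def
  by (metis (no_types, lifting) fst_diff norm_fst_le order_trans prod.collapse)

lemma LIP_snd: "LIP f \<Longrightarrow> LIP (\<lambda>u. snd (f u))"
  unfolding LIP_def lipB_def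
  by (metis (no_types, lifting) snd_diff norm_snd_le order_trans prod.collapse)

lemma adm_mk':
  assumes "LIP c" "LIP z"
    and ae: "AE s in lebesgue. s \<in> {0..1} \<longrightarrow> (\<exists>c' z'. (c has_vector_derivative c') (at s within {0..1})
        \<and> (z has_real_derivative z') (at s within {0..1}) \<and> z' = cr (c s) c' / 2)"
  shows "admissible (mk c z)"
proof -
  obtain A B where A: "lipB A c" and B: "lipB B z" using assms unfolding LIP_def by blast
  show ?thesis by (rule adm_mk[OF A _ ae, of B]) (use B in \<open>auto simp: lipB_def\<close>)
qed

lemma vd_scale: "((f::real\<Rightarrow>real) has_real_derivative D) F \<Longrightarrow> ((\<lambda>u. f u *\<^sub>R v) has_vector_derivative D *\<^sub>R v) F"
  using bounded_linear.has_vector_derivative[OF bounded_linear_scaleR_left, of f D F v]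
  by (simp add: has_real_derivative_iff_has_vector_derivative)

lemma cr_deriv:
  assumes "(a has_vector_derivative a') (at x within S)" "(b has_vector_derivative b') (at x within S)"
  shows "((\<lambda>u. cr (a u) (b u)) has_real_derivative (cr (a x) b' + cr a' (b x))) (at x within S)"
proof -
  have f1: "((\<lambda>u. fst (a u)) has_real_derivative fst a') (at x within S)"
    using bounded_linear.has_vector_derivative[OF bounded_linear_fst assms(1)]
    by (simp add: has_real_derivative_iff_has_vector_derivative)
  have s1: "((\<lambda>u. snd (a u)) has_real_derivative snd a') (at x within S)"
    using bounded_linear.has_vector_derivative[OF bounded_linear_snd assms(1)]
    by (simp add: has_real_derivative_iff_has_vector_derivative)
  have f2: "((\<lambda>u. fst (b u)) has_real_derivative fst b') (at x within S)"
    using bounded_linear.has_vector_derivative[OF bounded_linear_fst assms(2)]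
    by (simp add: has_real_derivative_iff_has_vector_derivative)
  have s2: "((\<lambda>u. snd (b u)) has_real_derivative snd b') (at x within S)"
    using bounded_linear.has_vector_derivative[OF bounded_linear_snd assms(2)]
    by (simp add: has_real_derivative_iff_has_vector_derivative)
  have "((\<lambda>u. fst (a u) * snd (b u) - snd (a u) * fst (b u)) has_real_derivative
     (fst (a x) * snd b' + fst a' * snd (b x)) - (snd (a x) * fst b' + snd a' * fst (b x))) (at x within S)"
    by (intro DERIV_diff DERIV_mult' f1 s1 f2 s2)
  then show ?thesis by (simp add: cr_def algebra_simps)
qed



definition curves :: "real\<times>real \<Rightarrow> real \<Rightarrow> (real \<Rightarrow> real\<times>real\<times>real) set" where
  "curves p t = {\<gamma>. admissible \<gamma> \<and> \<gamma> 0 = (fst p, snd p, t) \<and> \<gamma> 1 = (0,0,0)}"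

lemma LIP_div_const: "LIP (f::real\<Rightarrow>real) \<Longrightarrow> LIP (\<lambda>u. f u / c)"
  using LIP_mult_const[of f "1/c"] by simp

lemma lipB_z: "lipB B \<gamma> \<Longrightarrow> lipB B (\<lambda>u. snd (snd (\<gamma> u)))"
  unfolding lipB_def
proof (intro ballI)
  fix s t :: real assume "\<forall>s\<in>{0..1}. \<forall>t\<in>{0..1}. norm (\<gamma> s - \<gamma> t) \<le> B * \<bar>s - t\<bar>" "s \<in> {0..1}" "t \<in> {0..1}"
  then have 1: "norm (\<gamma> s - \<gamma> t) \<le> B * \<bar>s - t\<bar>" by blast
  have "norm (snd (snd (\<gamma> s)) - snd (snd (\<gamma> t))) \<le> norm (snd (\<gamma> s) - snd (\<gamma> t))"
    by (metis norm_snd_le prod.collapse snd_diff)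
  also have "\<dots> \<le> norm (\<gamma> s - \<gamma> t)" by (metis norm_snd_le prod.collapse snd_diff)
  finally show "norm (snd (snd (\<gamma> s)) - snd (snd (\<gamma> t))) \<le> B * \<bar>s - t\<bar>" using 1 by simp
qed

context QL begin

lemma curve_len_lower: assumes "\<gamma> \<in> curves p t" shows "normL Q (- p) \<le> lengthL Q \<gamma>"
proof -
  have adm: "admissible \<gamma>" using assms by (simp add: curves_def)
  then obtain B N where B: "lipB B \<gamma>" by (rule adm_dest)
  have "normL Q (proj_xy (\<gamma> 1) - proj_xy (\<gamma> 0)) \<le> lengthL Q \<gamma>" by (rule length_ge_ends[OF B])
  moreover have "proj_xy (\<gamma> 1) - proj_xy (\<gamma> 0) = - p" using assms by (simp add: curves_def proj_xy_def prod_eq_iff)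
  ultimately show ?thesis by simp
qed

lemma curve_c_bound: assumes "\<gamma> \<in> curves p t" "u \<in> {0..1}"
  shows "norm (proj_xy (\<gamma> u)) \<le> norm p + R * lengthL Q \<gamma>"
proof -
  have adm: "admissible \<gamma>" using assms by (simp add: curves_def)
  then obtain B N where B: "lipB B \<gamma>" by (rule adm_dest)
  have c0: "proj_xy (\<gamma> 0) = p" using assms by (simp add: curves_def proj_xy_def)
  have "norm (proj_xy (\<gamma> u) - p) / R \<le> normL Q (proj_xy (\<gamma> u) - p)" by (rule normL_lower)
  also have "\<dots> \<le> lengthL Q \<gamma>" using length_ge_mid[OF B, of u] assms c0 by auto
  finally have "norm (proj_xy (\<gamma> u) - p) \<le> R * lengthL Q \<gamma>" using R_pos by (simp add: field_simps)
  moreover have "norm (proj_xy (\<gamma> u)) \<le> norm p + norm (proj_xy (\<gamma> u) - p)"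
    by (metis add.commute diff_add_cancel norm_triangle_ineq)
  ultimately show ?thesis by simp
qed

lemma seg: "\<exists>\<gamma>\<in>curves p 0. lengthL Q \<gamma> \<le> normL Q (- p)"
proof -
  define c where "c u = (1 - u) *\<^sub>R p" for u :: real
  define z where "z u = (0::real)" for u :: real
  have Lc: "LIP c" unfolding c_def by (intro LIP_scaleR LIP_diff LIP_const LIP_id)
  have Lz: "LIP z" unfolding z_def by (rule LIP_const)
  have adm: "admissible (mk c z)"
  proof (rule adm_mk'[OF Lc Lz])
    show "AE s in lebesgue. s \<in> {0..1} \<longrightarrow> (\<exists>c' z'. (c has_vector_derivative c') (at s within {0..1}) \<and>
        (z has_real_derivative z') (at s within {0..1}) \<and> z' = cr (c s) c' / 2)"
    proof (rule AE_I2, intro impI exI conjI)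
      fix s :: real
      have "((\<lambda>u. 1 - u) has_real_derivative 0 - 1) (at s within {0..1})"
        by (intro DERIV_diff DERIV_const DERIV_ident)
      then show "(c has_vector_derivative (-1) *\<^sub>R p) (at s within {0..1})"
        unfolding c_def[abs_def] using vd_scale by force
      show "(z has_real_derivative 0) (at s within {0..1})" unfolding z_def[abs_def] by simp
      show "0 = cr (c s) ((-1) *\<^sub>R p) / 2" by (simp add: c_def cr_def)
    qed
  qed
  have ends: "mk c z 0 = (fst p, snd p, 0)" "mk c z 1 = (0,0,0)" by (simp_all add: mk_def c_def z_def)
  have len: "lengthL Q (mk c z) \<le> normL Q (- p)"
  proof (rule length_le)
    fix n t assume pt: "part n t"
    have "psum Q (\<lambda>u. proj_xy (mk c z u)) n t = (\<Sum>i<n. normL Q ((t (Suc i) - t i) *\<^sub>R (- p)))"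
      unfolding psum_def proj_mk c_def by (intro sum.cong refl) (simp add: algebra_simps)
    also have "\<dots> \<le> (\<Sum>i<n. (t (Suc i) - t i) * normL Q (- p))"
      using pt by (intro sum_mono normL_scale_le) (auto simp: part_def)
    also have "\<dots> = normL Q (- p)" using part_tele[OF pt] by (simp add: sum_distrib_right[symmetric])
    finally show "psum Q (\<lambda>u. proj_xy (mk c z u)) n t \<le> normL Q (- p)" .
  qed
  show ?thesis using adm ends len by (intro bexI[of _ "mk c z"]) (auto simp: curves_def)
qed

end


context QL begin

lemma interp:
  assumes g: "\<gamma> \<in> curves p t'" and t: "0 \<le> t" "t \<le> t'" "0 < t'"
  shows "\<exists>\<gamma>2\<in>curves p t. lengthL Q \<gamma>2 \<le> lengthL Q \<gamma>
     - (t' - t) / (2 * t' + norm p * (norm p + R * lengthL Q \<gamma>)) * (lengthL Q \<gamma> - normL Q (- p))"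
proof -
  define L where "L = lengthL Q \<gamma>"
  define J where "J = norm p * (norm p + R * L)"
  define l0 where "l0 = normL Q (- p)"
  have adm: "admissible \<gamma>" using g by (simp add: curves_def)
  obtain B N where B: "lipB B \<gamma>" and N: "negligible N"
    and der: "\<And>s. s \<in> {0..1} \<Longrightarrow> s \<notin> N \<Longrightarrow> \<exists>c' z'. ((\<lambda>u. proj_xy (\<gamma> u)) has_vector_derivative c') (at s within {0..1})
        \<and> ((\<lambda>u. snd (snd (\<gamma> u))) has_real_derivative z') (at s within {0..1}) \<and> z' = cr (proj_xy (\<gamma> s)) c' / 2"
    using adm_dest[OF adm] by metis
  define c where "c u = proj_xy (\<gamma> u)" for u
  define z where "z u = snd (snd (\<gamma> u))" for u
  have Lc: "LIP c" unfolding c_def LIP_def using lipB_proj[OF B] by blast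
  have Lz: "LIP z" unfolding z_def LIP_def using lipB_z[OF B] by blast
  have c0: "c 0 = p" and c1: "c 1 = 0" and z0: "z 0 = t'" and z1: "z 1 = 0"
    using g by (auto simp: curves_def c_def z_def proj_xy_def zero_prod_def)
  have cb: "norm (c u) \<le> norm p + R * L" if "u \<in> {0..1}" for u
    using curve_c_bound[OF g that] by (simp add: c_def L_def)
  have Ll0: "l0 \<le> L" using curve_len_lower[OF g] by (simp add: l0_def L_def)
  have l0nn: "0 \<le> l0" by (simp add: l0_def normL_nonneg)
  have J0: "0 \<le> J" unfolding J_def using l0nn Ll0 R_pos by (intro mult_nonneg_nonneg add_nonneg_nonneg) auto
  define h where "h v = cr p (c v)" for v
  have Lh: "LIP h" unfolding h_def by (intro LIP_cr LIP_const Lc)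
  have hb: "\<bar>h v\<bar> \<le> J" if "v \<in> {0..1}" for v
  proof -
    have "\<bar>h v\<bar> \<le> norm p * norm (c v)" unfolding h_def by (rule cr_bound)
    also have "\<dots> \<le> J" unfolding J_def by (intro mult_left_mono cb that) simp
    finally show ?thesis .
  qed
  have hcont: "continuous_on {0..1} h" by (rule LIP_cont[OF Lh])
  define F where "F u = integral {0..u} h" for u
  have LF: "LIP F" unfolding F_def[abs_def] by (rule LIP_int[OF Lh])
  have lipF: "lipB J F" unfolding F_def[abs_def] using lipB_int[OF hcont hb] by simp
  have F0: "F 0 = 0" by (simp add: F_def)
  have F1: "\<bar>F 1\<bar> \<le> J" using lipF F0 unfolding lipB_def by (metis atLeastAtMost_iff diff_zero abs_one mult.right_neutral order_refl real_norm_def zero_le_one)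
  have Fder: "(F has_real_derivative h u) (at u within {0..1})" if "u \<in> {0..1}" for u
    unfolding F_def[abs_def] using integral_has_real_derivative[OF hcont that] .
  define g where "g s = (1 - s)^2 * (- t') + s * (1 - s) * F 1" for s
  have "\<exists>s. 0 \<le> s \<and> s \<le> 1 \<and> g s = - t"
    by (rule IVT') (use t in \<open>auto simp: g_def intro!: continuous_intros\<close>)
  then obtain s where s: "0 \<le> s" "s \<le> 1" "g s = - t" by blast
  define cs where "cs u = (1 - s) *\<^sub>R c u + (s * (1 - u)) *\<^sub>R p" for u
  define zs where "zs u = (1 - s)^2 * z u + (s * (1 - s) / 2) * ((1 - u) * h u + 2 * F u) + (t - (1 - s)^2 * t')" for u
  have Lcs: "LIP cs" unfolding cs_def[abs_def]
    by (intro LIP_add LIP_scale Lc LIP_scaleR LIP_mult_const LIP_diff LIP_const LIP_id)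
  have Lzs: "LIP zs" unfolding zs_def[abs_def]
    by (intro LIP_add LIP_mult_const Lz LIP_mult LIP_diff LIP_const LIP_id Lh LF)
  have adm2: "admissible (mk cs zs)"
  proof (rule adm_mk'[OF Lcs Lzs])
    show "AE u in lebesgue. u \<in> {0..1} \<longrightarrow> (\<exists>c' z'. (cs has_vector_derivative c') (at u within {0..1}) \<and>
        (zs has_real_derivative z') (at u within {0..1}) \<and> z' = cr (cs u) c' / 2)"
    proof (rule AE_from_negligible[OF N], intro impI)
      fix u assume uN: "u \<notin> N" and u: "u \<in> {0..1}"
      obtain c' z' where dc: "(c has_vector_derivative c') (at u within {0..1})"
        and dz: "(z has_real_derivative z') (at u within {0..1})" and zc: "z' = cr (c u) c' / 2"
        using der[OF u uN] unfolding c_def z_def by blast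
      have dh: "(h has_real_derivative (cr p c')) (at u within {0..1})"
        using cr_deriv[OF has_vector_derivative_const dc, of p] unfolding h_def[abs_def] by (simp add: cr_def)
      have d1: "((\<lambda>u. (1 - s) *\<^sub>R c u) has_vector_derivative (1 - s) *\<^sub>R c') (at u within {0..1})"
        using bounded_linear.has_vector_derivative[OF bounded_linear_scaleR_right dc] .
      have "((\<lambda>u. s * (1 - u)) has_real_derivative s * (0 - 1)) (at u within {0..1})"
        by (intro DERIV_cmult DERIV_diff DERIV_const DERIV_ident)
      then have d2: "((\<lambda>u. (s * (1 - u)) *\<^sub>R p) has_vector_derivative (- s) *\<^sub>R p) (at u within {0..1})"
        using vd_scale by force
      have dcs: "(cs has_vector_derivative ((1 - s) *\<^sub>R c' + (- s) *\<^sub>R p)) (at u within {0..1})"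
        unfolding cs_def[abs_def] by (rule has_vector_derivative_add[OF d1 d2])
      have "((\<lambda>u. (1 - u) * h u) has_real_derivative ((1 - u) * cr p c' + (0 - 1) * h u)) (at u within {0..1})"
        by (intro DERIV_mult' DERIV_diff DERIV_const DERIV_ident dh)
      then have "(zs has_real_derivative ((1 - s)^2 * z' + (s * (1 - s) / 2) * (((1 - u) * cr p c' + (0 - 1) * h u) + 2 * h u) + 0))
          (at u within {0..1})"
        unfolding zs_def[abs_def] by (intro DERIV_add DERIV_cmult dz DERIV_const Fder[OF u])
      moreover have "(1 - s)^2 * z' + (s * (1 - s) / 2) * (((1 - u) * cr p c' + (0 - 1) * h u) + 2 * h u) + 0
          = cr (cs u) ((1 - s) *\<^sub>R c' + (- s) *\<^sub>R p) / 2"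
        unfolding zc h_def cs_def cr_def by (simp add: field_simps power2_eq_square)
      ultimately show "\<exists>c' z'. (cs has_vector_derivative c') (at u within {0..1}) \<and>
        (zs has_real_derivative z') (at u within {0..1}) \<and> z' = cr (cs u) c' / 2"
        using dcs by blast
    qed
  qed
  have e0: "mk cs zs 0 = (fst p, snd p, t)"
    by (simp add: mk_def cs_def zs_def c0 z0 F0 h_def cr_def algebra_simps)
  have "zs 1 = t + g s" by (simp add: zs_def z1 g_def field_simps power2_eq_square)
  then have e1: "mk cs zs 1 = (0, 0, 0)" using s by (simp add: mk_def cs_def c1)
  have len: "lengthL Q (mk cs zs) \<le> (1 - s) * L + s * l0"
  proof (rule length_le)
    fix n tt assume pt: "part n tt"
    have "psum Q (\<lambda>u. proj_xy (mk cs zs u)) n tt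
       \<le> (\<Sum>i<n. (1 - s) * normL Q (c (tt (Suc i)) - c (tt i)) + s * ((tt (Suc i) - tt i) * l0))"
      unfolding psum_def proj_mk
    proof (rule sum_mono)
      fix i assume i: "i \<in> {..<n}"
      have mono: "tt i \<le> tt (Suc i)" using pt i by (auto simp: part_def)
      have "cs (tt (Suc i)) - cs (tt i) = (1 - s) *\<^sub>R (c (tt (Suc i)) - c (tt i)) + (s * (tt (Suc i) - tt i)) *\<^sub>R (- p)"
        by (simp add: cs_def algebra_simps)
      then have "normL Q (cs (tt (Suc i)) - cs (tt i)) \<le> normL Q ((1 - s) *\<^sub>R (c (tt (Suc i)) - c (tt i))) + normL Q ((s * (tt (Suc i) - tt i)) *\<^sub>R (- p))"
        using normL_add[of "(1 - s) *\<^sub>R (c (tt (Suc i)) - c (tt i))" "(s * (tt (Suc i) - tt i)) *\<^sub>R (- p)"] by simp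
      also have "\<dots> \<le> (1 - s) * normL Q (c (tt (Suc i)) - c (tt i)) + (s * (tt (Suc i) - tt i)) * l0"
        unfolding l0_def using s mono by (intro add_mono normL_scale_le) auto
      finally show "normL Q (cs (tt (Suc i)) - cs (tt i)) \<le> (1 - s) * normL Q (c (tt (Suc i)) - c (tt i)) + s * ((tt (Suc i) - tt i) * l0)"
        by simp
    qed
    also have "\<dots> = (1 - s) * psum Q c n tt + s * l0"
    proof -
      have "(\<Sum>i<n. s * ((tt (Suc i) - tt i) * l0)) = s * ((\<Sum>i<n. (tt (Suc i) - tt i)) * l0)"
        by (simp add: sum_distrib_left sum_distrib_right)
      then show ?thesis using part_tele[OF pt] by (simp add: psum_def sum.distrib sum_distrib_left)
    qed
    also have "\<dots> \<le> (1 - s) * L + s * l0"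
      using psum_le_length[OF B pt] s unfolding L_def c_def[abs_def] by (intro add_mono mult_left_mono) auto
    finally show "psum Q (\<lambda>u. proj_xy (mk cs zs u)) n tt \<le> (1 - s) * L + s * l0" .
  qed
  have key: "t' - t \<le> s * (2 * t' + J)"
  proof -
    have "t' - t = s * (2 - s) * t' + s * (1 - s) * F 1" using s(3) by (simp add: g_def algebra_simps power2_eq_square)
    moreover have "s * (2 - s) * t' \<le> s * 2 * t'" using s t by (intro mult_right_mono mult_left_mono) auto
    moreover have "s * (1 - s) * F 1 \<le> s * J"
    proof -
      have "s * (1 - s) * F 1 \<le> s * (1 - s) * J" using F1 s by (intro mult_left_mono) auto
      also have "\<dots> \<le> s * J" using s J0 by (simp add: mult_left_le_one_le mult_le_cancel_left1 mult.assoc mult_left_mono)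
      finally show ?thesis .
    qed
    ultimately show ?thesis by (simp add: algebra_simps)
  qed
  have pos: "0 < 2 * t' + J" using t J0 by simp
  have ks: "(t' - t) / (2 * t' + J) \<le> s" using key pos by (simp add: divide_le_eq mult.commute)
  have "(1 - s) * L + s * l0 = L - s * (L - l0)" by (simp add: algebra_simps)
  also have "\<dots> \<le> L - (t' - t) / (2 * t' + J) * (L - l0)"
  proof -
    have "(t' - t) / (2 * t' + J) * (L - l0) \<le> s * (L - l0)" using ks Ll0 by (intro mult_right_mono) auto
    then show ?thesis by simp
  qed
  finally have "lengthL Q (mk cs zs) \<le> L - (t' - t) / (2 * t' + J) * (L - l0)" using len by simp
  then show ?thesis using adm2 e0 e1 unfolding L_def J_def l0_def
    by (intro bexI[of _ "mk cs zs"]) (auto simp: curves_def)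
qed

end


definition wv :: "real \<Rightarrow> real\<times>real" where "wv u = (u - u*u, u*(u*u) - u*u)"
definition wd :: "real \<Rightarrow> real\<times>real" where "wd u = (1 - 2*u, 3*(u*u) - 2*u)"
definition WW :: "real \<Rightarrow> real" where
  "WW u = (-1/3) * (u*(u*u)) + (1/2) * (u*(u*(u*u))) + (-1/5) * (u*(u*(u*(u*u))))"

lemma wv_deriv: "(wv has_vector_derivative wd u) (at u within S)"
proof -
  have 1: "((\<lambda>u. u - u*u) has_real_derivative 1 - (u*1 + 1*u)) (at u within S)"
    by (intro DERIV_diff DERIV_mult' DERIV_ident)
  have 2: "((\<lambda>u. u*(u*u) - u*u) has_real_derivative (u*(u*1 + 1*u) + 1*(u*u)) - (u*1 + 1*u)) (at u within S)"
    by (intro DERIV_diff DERIV_mult' DERIV_ident)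
  have "(wv has_vector_derivative (1 - (u*1 + 1*u), (u*(u*1 + 1*u) + 1*(u*u)) - (u*1 + 1*u))) (at u within S)"
    unfolding wv_def[abs_def] using 1 2 by (intro has_vector_derivative_Pair) (simp_all add: has_real_derivative_iff_has_vector_derivative)
  then show ?thesis by (simp add: wd_def algebra_simps)
qed

lemma WW_deriv: "(WW has_real_derivative cr (wv u) (wd u)) (at u within S)"
proof -
  have "(WW has_real_derivative (-1/3) * (u*(u*1 + 1*u) + 1*(u*u)) + (1/2) * (u*(u*(u*1+1*u) + 1*(u*u)) + 1*(u*(u*u))) + (-1/5) * (u*(u*(u*(u*1+1*u) + 1*(u*u)) + 1*(u*(u*u))) + 1*(u*(u*(u*u))))) (at u within S)"
    unfolding WW_def[abs_def] by (intro DERIV_add DERIV_cmult DERIV_mult' DERIV_ident)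
  then show ?thesis by (simp add: cr_def wv_def wd_def algebra_simps)
qed

lemma WW01: "WW 0 = 0" "WW 1 = - 1/30" by (simp_all add: WW_def)

lemma wv01: "wv 0 = 0" "wv 1 = 0" by (simp_all add: wv_def zero_prod_def)

lemma LIP_wd: "LIP wd" unfolding wd_def[abs_def]
  by (intro LIP_pair LIP_diff LIP_const LIP_mult_const LIP_id LIP_mult)

lemma LIP_WW: "LIP WW" unfolding WW_def[abs_def]
  by (intro LIP_add LIP_mult_const LIP_mult LIP_id)

lemma lip_wv: "lipB 2 wv"
proof -
  have a: "lipB 1 (\<lambda>u::real. u - u*u)"
  proof (rule deriv_lip)
    fix x :: real
    show "((\<lambda>u. u - u*u) has_real_derivative 1 - (x*1 + 1*x)) (at x)" by (intro DERIV_diff DERIV_mult' DERIV_ident)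
    assume "x \<in> {0..1}" then show "\<bar>1 - (x*1 + 1*x)\<bar> \<le> 1" by auto
  qed
  have b: "lipB 1 (\<lambda>u::real. u*(u*u) - u*u)"
  proof (rule deriv_lip)
    fix x :: real
    show "((\<lambda>u. u*(u*u) - u*u) has_real_derivative (x*(x*1 + 1*x) + 1*(x*x)) - (x*1 + 1*x)) (at x)"
      by (intro DERIV_diff DERIV_mult' DERIV_ident)
    assume x: "x \<in> {0..1}"
    have 1: "(3*x+1)*(x-1) \<le> 0" using x by (intro mult_nonneg_nonpos) auto
    have 2: "0 \<le> 3*(x - 1/3)^2" by simp
    show "\<bar>(x*(x*1 + 1*x) + 1*(x*x)) - (x*1 + 1*x)\<bar> \<le> 1"
      using 1 2 by (simp add: abs_le_iff power2_eq_square algebra_simps)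
  qed
  show ?thesis using lipB_pair[OF a b] by (simp add: wv_def[abs_def])
qed

context QL begin

lemma perturb:
  assumes g: "\<gamma> \<in> curves p t" and d: "0 \<le> \<delta>"
  shows "\<exists>\<gamma>2\<in>curves p (t + \<delta>). lengthL Q \<gamma>2 \<le> lengthL Q \<gamma> + 2 / \<rho> * sqrt (60 * \<delta>)"
proof -
  define L where "L = lengthL Q \<gamma>"
  have adm: "admissible \<gamma>" using g by (simp add: curves_def)
  obtain B N where B: "lipB B \<gamma>" and N: "negligible N"
    and der: "\<And>s. s \<in> {0..1} \<Longrightarrow> s \<notin> N \<Longrightarrow> \<exists>c' z'. ((\<lambda>u. proj_xy (\<gamma> u)) has_vector_derivative c') (at s within {0..1})
        \<and> ((\<lambda>u. snd (snd (\<gamma> u))) has_real_derivative z') (at s within {0..1}) \<and> z' = cr (proj_xy (\<gamma> s)) c' / 2"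
    using adm_dest[OF adm] by metis
  define c where "c u = proj_xy (\<gamma> u)" for u
  define z where "z u = snd (snd (\<gamma> u))" for u
  have Lc: "LIP c" unfolding c_def LIP_def using lipB_proj[OF B] by blast
  have Lz: "LIP z" unfolding z_def LIP_def using lipB_z[OF B] by blast
  have c0: "c 0 = p" and c1: "c 1 = 0" and z0: "z 0 = t" and z1: "z 1 = 0"
    using g by (auto simp: curves_def c_def z_def proj_xy_def zero_prod_def)
  define gi where "gi v = cr (c v) (wd v)" for v
  have Lgi: "LIP gi" unfolding gi_def[abs_def] by (intro LIP_cr Lc LIP_wd)
  have gicont: "continuous_on {0..1} gi" by (rule LIP_cont[OF Lgi])
  define G where "G u = integral {0..u} gi" for u
  have LG: "LIP G" unfolding G_def[abs_def] by (rule LIP_int[OF Lgi])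
  have G0: "G 0 = 0" by (simp add: G_def)
  have Gder: "(G has_real_derivative gi u) (at u within {0..1})" if "u \<in> {0..1}" for u
    unfolding G_def[abs_def] using integral_has_real_derivative[OF gicont that] .
  define phi where "phi r = r * \<bar>G 1\<bar> + r * r / 60" for r
  have "\<exists>r. 0 \<le> r \<and> r \<le> sqrt (60 * \<delta>) \<and> phi r = \<delta>"
  proof (rule IVT')
    show "phi 0 \<le> \<delta>" using d by (simp add: phi_def)
    have "sqrt (60 * \<delta>) * sqrt (60 * \<delta>) = 60 * \<delta>" using d by simp
    then show "\<delta> \<le> phi (sqrt (60 * \<delta>))" unfolding phi_def using d by simp
    show "0 \<le> sqrt (60 * \<delta>)" using d by simp
    show "continuous_on {0..sqrt (60 * \<delta>)} phi" unfolding phi_def by (intro continuous_intros) auto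
  qed
  then obtain r where r: "0 \<le> r" "r \<le> sqrt (60 * \<delta>)" "phi r = \<delta>" by blast
  define \<sigma> where "\<sigma> = (if 0 \<le> G 1 then - r else r)"
  have sG: "\<sigma> * G 1 = - r * \<bar>G 1\<bar>" and s2: "\<sigma> * \<sigma> = r * r" and sabs: "\<bar>\<sigma>\<bar> = r"
    using r by (auto simp: \<sigma>_def)
  define cs where "cs u = c u + \<sigma> *\<^sub>R wv u" for u
  define zs where "zs u = z u + \<sigma> * (G u + cr (wv u) (c u) / 2) + (\<sigma> * \<sigma> / 2) * WW u + \<delta>" for u
  have Lwv: "LIP wv" using lip_wv unfolding LIP_def by blast
  have Lcs: "LIP cs" unfolding cs_def[abs_def] by (intro LIP_add LIP_scale Lc Lwv)
  have Lzs: "LIP zs" unfolding zs_def[abs_def]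
    by (intro LIP_add LIP_mult_const Lz LG LIP_div_const LIP_cr Lwv Lc LIP_WW LIP_const)
  have adm2: "admissible (mk cs zs)"
  proof (rule adm_mk'[OF Lcs Lzs])
    show "AE u in lebesgue. u \<in> {0..1} \<longrightarrow> (\<exists>c' z'. (cs has_vector_derivative c') (at u within {0..1}) \<and>
        (zs has_real_derivative z') (at u within {0..1}) \<and> z' = cr (cs u) c' / 2)"
    proof (rule AE_from_negligible[OF N], intro impI)
      fix u assume uN: "u \<notin> N" and u: "u \<in> {0..1}"
      obtain c' z' where dc: "(c has_vector_derivative c') (at u within {0..1})"
        and dz: "(z has_real_derivative z') (at u within {0..1})" and zc: "z' = cr (c u) c' / 2"
        using der[OF u uN] unfolding c_def z_def by blast
      have dcs: "(cs has_vector_derivative (c' + \<sigma> *\<^sub>R wd u)) (at u within {0..1})"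
        unfolding cs_def[abs_def]
        by (intro has_vector_derivative_add dc bounded_linear.has_vector_derivative[OF bounded_linear_scaleR_right] wv_deriv)
      have dwc: "((\<lambda>u. cr (wv u) (c u)) has_real_derivative (cr (wv u) c' + cr (wd u) (c u))) (at u within {0..1})"
        by (rule cr_deriv[OF wv_deriv dc])
      have "(zs has_real_derivative (z' + \<sigma> * (gi u + (cr (wv u) c' + cr (wd u) (c u)) / 2) + (\<sigma> * \<sigma> / 2) * cr (wv u) (wd u) + 0))
          (at u within {0..1})"
        unfolding zs_def[abs_def]
        by (intro DERIV_add DERIV_cmult dz Gder[OF u] DERIV_const WW_deriv DERIV_cdivide dwc)
      moreover have "z' + \<sigma> * (gi u + (cr (wv u) c' + cr (wd u) (c u)) / 2) + (\<sigma> * \<sigma> / 2) * cr (wv u) (wd u) + 0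
          = cr (cs u) (c' + \<sigma> *\<^sub>R wd u) / 2"
        unfolding zc gi_def cs_def cr_def by (simp add: field_simps)
      ultimately show "\<exists>c' z'. (cs has_vector_derivative c') (at u within {0..1}) \<and>
        (zs has_real_derivative z') (at u within {0..1}) \<and> z' = cr (cs u) c' / 2"
        using dcs by blast
    qed
  qed
  have e0: "mk cs zs 0 = (fst p, snd p, t + \<delta>)"
    by (simp add: mk_def cs_def zs_def c0 z0 G0 wv01 WW01 cr_def)
  have "zs 1 = \<delta> - phi r"
    by (simp add: zs_def z1 c1 wv01 WW01 cr_def phi_def sG s2 algebra_simps)
  then have e1: "mk cs zs 1 = (0, 0, 0)" using r by (simp add: mk_def cs_def c1 wv01)
  have len: "lengthL Q (mk cs zs) \<le> L + 2 / \<rho> * r"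
  proof (rule length_le)
    fix n tt assume pt: "part n tt"
    have "psum Q (\<lambda>u. proj_xy (mk cs zs u)) n tt
       \<le> (\<Sum>i<n. normL Q (c (tt (Suc i)) - c (tt i)) + 2 / \<rho> * r * (tt (Suc i) - tt i))"
      unfolding psum_def proj_mk
    proof (rule sum_mono)
      fix i assume i: "i \<in> {..<n}"
      have ri: "0 \<le> tt i" "tt i \<le> 1" "0 \<le> tt (Suc i)" "tt (Suc i) \<le> 1" "tt i \<le> tt (Suc i)"
        using part_range[OF pt] i pt by (auto simp: part_def)
      have "cs (tt (Suc i)) - cs (tt i) = (c (tt (Suc i)) - c (tt i)) + \<sigma> *\<^sub>R (wv (tt (Suc i)) - wv (tt i))"
        by (simp add: cs_def algebra_simps)
      then have "normL Q (cs (tt (Suc i)) - cs (tt i)) \<le> normL Q (c (tt (Suc i)) - c (tt i)) + normL Q (\<sigma> *\<^sub>R (wv (tt (Suc i)) - wv (tt i)))"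
        using normL_add[of "c (tt (Suc i)) - c (tt i)" "\<sigma> *\<^sub>R (wv (tt (Suc i)) - wv (tt i))"] by simp
      also have "normL Q (\<sigma> *\<^sub>R (wv (tt (Suc i)) - wv (tt i))) \<le> norm (\<sigma> *\<^sub>R (wv (tt (Suc i)) - wv (tt i))) / \<rho>"
        by (rule normL_upper)
      also have "\<dots> = r * norm (wv (tt (Suc i)) - wv (tt i)) / \<rho>" using sabs by simp
      also have "\<dots> \<le> r * (2 * \<bar>tt (Suc i) - tt i\<bar>) / \<rho>"
      proof -
        have "norm (wv (tt (Suc i)) - wv (tt i)) \<le> 2 * \<bar>tt (Suc i) - tt i\<bar>"
          using lip_wv ri unfolding lipB_def by (meson atLeastAtMost_iff order_trans)
        then show ?thesis using r rho by (intro divide_right_mono mult_left_mono) auto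
      qed
      also have "\<dots> = 2 / \<rho> * r * (tt (Suc i) - tt i)" using ri by simp
      finally show "normL Q (cs (tt (Suc i)) - cs (tt i)) \<le> normL Q (c (tt (Suc i)) - c (tt i)) + 2 / \<rho> * r * (tt (Suc i) - tt i)"
        by simp
    qed
    also have "\<dots> = psum Q c n tt + 2 / \<rho> * r"
    proof -
      have "(\<Sum>i<n. 2 / \<rho> * r * (tt (Suc i) - tt i)) = 2 / \<rho> * r * (\<Sum>i<n. (tt (Suc i) - tt i))"
        by (simp add: sum_distrib_left)
      then show ?thesis using part_tele[OF pt] by (simp add: psum_def sum.distrib)
    qed
    also have "\<dots> \<le> L + 2 / \<rho> * r"
      using psum_le_length[OF B pt] unfolding L_def c_def[abs_def] by simp
    finally show "psum Q (\<lambda>u. proj_xy (mk cs zs u)) n tt \<le> L + 2 / \<rho> * r" .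
  qed
  also have "\<dots> \<le> L + 2 / \<rho> * sqrt (60 * \<delta>)" using r rho by (intro add_left_mono mult_left_mono) auto
  finally show ?thesis using adm2 e0 e1 unfolding L_def
    by (intro bexI[of _ "mk cs zs"]) (auto simp: curves_def)
qed

end


lemma deriv_bound_real:
  fixes f :: "real \<Rightarrow> real"
  assumes D: "(f has_real_derivative D) (at x within {0..1})" and x: "x \<in> {0..1}"
    and lip: "\<And>s t. s \<in> {0..1} \<Longrightarrow> t \<in> {0..1} \<Longrightarrow> \<bar>f s - f t\<bar> \<le> B * \<bar>s - t\<bar>"
  shows "\<bar>D\<bar> \<le> B"
proof -
  have lim: "((\<lambda>y. (f y - f x) / (y - x)) \<longlongrightarrow> D) (at x within {0..1})"
    using D by (simp add: has_field_derivative_iff)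
  then have lim2: "((\<lambda>y. \<bar>(f y - f x) / (y - x)\<bar>) \<longlongrightarrow> \<bar>D\<bar>) (at x within {0..1})"
    by (rule tendsto_rabs)
  have ev: "\<forall>\<^sub>F y in at x within {0..1}. \<bar>(f y - f x) / (y - x)\<bar> \<le> B"
    unfolding eventually_at_filter
  proof (rule always_eventually, intro allI impI)
    fix y assume y: "y \<noteq> x" "y \<in> {0..1}"
    have "\<bar>f y - f x\<bar> \<le> B * \<bar>y - x\<bar>" using lip[OF y(2) x] .
    then show "\<bar>(f y - f x) / (y - x)\<bar> \<le> B" using y by (simp add: abs_divide divide_le_eq)
  qed
  have nb: "at x within {0..1} \<noteq> bot" using x by (simp add: trivial_limit_within)
  show ?thesis by (rule tendsto_upperbound[OF lim2 ev nb])
qed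

lemma deriv_bound_vec:
  fixes c :: "real \<Rightarrow> real \<times> real"
  assumes D: "(c has_vector_derivative D) (at x within {0..1})" and x: "x \<in> {0..1}" and lip: "lipB B c"
  shows "norm D \<le> 2 * B"
proof -
  have 1: "((\<lambda>u. fst (c u)) has_real_derivative fst D) (at x within {0..1})"
    using bounded_linear.has_vector_derivative[OF bounded_linear_fst D]
    by (simp add: has_real_derivative_iff_has_vector_derivative)
  have 2: "((\<lambda>u. snd (c u)) has_real_derivative snd D) (at x within {0..1})"
    using bounded_linear.has_vector_derivative[OF bounded_linear_snd D]
    by (simp add: has_real_derivative_iff_has_vector_derivative)
  have l1: "\<bar>fst (c s) - fst (c t)\<bar> \<le> B * \<bar>s - t\<bar>" if "s \<in> {0..1}" "t \<in> {0..1}" for s t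
  proof -
    have "\<bar>fst (c s - c t)\<bar> \<le> norm (c s - c t)" using norm_fst_le[of "fst (c s - c t)" "snd (c s - c t)"] by (simp only: prod.collapse real_norm_def)
    also have "\<dots> \<le> B * \<bar>s - t\<bar>" using lip that unfolding lipB_def by blast
    finally show ?thesis by simp
  qed
  have l2: "\<bar>snd (c s) - snd (c t)\<bar> \<le> B * \<bar>s - t\<bar>" if "s \<in> {0..1}" "t \<in> {0..1}" for s t
  proof -
    have "\<bar>snd (c s - c t)\<bar> \<le> norm (c s - c t)" using norm_snd_le[of "snd (c s - c t)" "fst (c s - c t)"] by (simp only: prod.collapse real_norm_def)
    also have "\<dots> \<le> B * \<bar>s - t\<bar>" using lip that unfolding lipB_def by blast
    finally show ?thesis by simp
  qed
  have "norm D \<le> norm (fst D) + norm (snd D)" using norm_Pair_le[of "fst D" "snd D"] by simp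
  also have "\<dots> \<le> B + B" using deriv_bound_real[OF 1 x l1] deriv_bound_real[OF 2 x l2] by simp
  finally show ?thesis by simp
qed

context QL begin

lemma zeta_bound:
  assumes g: "\<gamma> \<in> curves p t" and B: "lipB B \<gamma>" and N: "negligible N"
    and der: "\<And>s. s \<in> {0..1} \<Longrightarrow> s \<notin> N \<Longrightarrow> \<exists>c' z'. ((\<lambda>u. proj_xy (\<gamma> u)) has_vector_derivative c') (at s within {0..1})
        \<and> ((\<lambda>u. snd (snd (\<gamma> u))) has_real_derivative z') (at s within {0..1}) \<and> z' = cr (proj_xy (\<gamma> s)) c' / 2"
    and ab: "0 \<le> a" "a \<le> b" "b \<le> 1"
  shows "\<bar>(snd (snd (\<gamma> b)) - cr (proj_xy (\<gamma> a)) (proj_xy (\<gamma> b)) / 2) - (snd (snd (\<gamma> a)) - cr (proj_xy (\<gamma> a)) (proj_xy (\<gamma> a)) / 2)\<bar>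
     \<le> (B * B * (b - a)) * (b - a)"
proof -
  define c where "c u = proj_xy (\<gamma> u)" for u
  define z where "z u = snd (snd (\<gamma> u))" for u
  have Bc: "lipB B c" unfolding c_def using lipB_proj[OF B] .
  have Lc: "LIP c" using Bc unfolding LIP_def by blast
  have Lz: "LIP z" unfolding z_def LIP_def using lipB_z[OF B] by blast
  define gg where "gg u = z u - cr (c a) (c u) / 2" for u
  have "LIP gg" unfolding gg_def[abs_def] by (intro LIP_diff Lz LIP_div_const LIP_cr LIP_const Lc)
  then obtain K where K: "lipB K gg" unfolding LIP_def by blast
  have B0: "0 \<le> B" using lipB_nonneg[OF B] .
  have "\<bar>gg b - gg a\<bar> \<le> (B * B * (b - a)) * (b - a)"
  proof (rule ae_mvi[OF ab(2) _ N])
    show "\<bar>gg s - gg t\<bar> \<le> K * \<bar>s - t\<bar>" if "s \<in> {a..b}" "t \<in> {a..b}" for s t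
      using K that ab unfolding lipB_def by (metis atLeastAtMost_iff order_trans real_norm_def)
    fix u assume u: "u \<in> {a..b}" "u \<notin> N"
    have u01: "u \<in> {0..1}" using u ab by auto
    obtain c' z' where dc: "(c has_vector_derivative c') (at u within {0..1})"
        and dz: "(z has_real_derivative z') (at u within {0..1})" and zc: "z' = cr (c u) c' / 2"
      using der[OF u01 u(2)] unfolding c_def z_def by blast
    have dcr: "((\<lambda>v. cr (c a) (c v)) has_real_derivative (cr (c a) c' + cr 0 (c u))) (at u within {0..1})"
      by (rule cr_deriv[OF has_vector_derivative_const dc])
    have "(gg has_real_derivative (z' - (cr (c a) c' + cr 0 (c u)) / 2)) (at u within {0..1})"
      unfolding gg_def[abs_def] by (intro DERIV_diff dz DERIV_cdivide dcr)
    then have dg: "(gg has_real_derivative (z' - (cr (c a) c' + cr 0 (c u)) / 2)) (at u within {a..b})"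
      by (rule DERIV_subset) (use ab in auto)
    have eq: "z' - (cr (c a) c' + cr 0 (c u)) / 2 = cr (c u - c a) c' / 2"
      unfolding zc by (simp add: cr_def field_simps)
    have "\<bar>cr (c u - c a) c' / 2\<bar> \<le> norm (c u - c a) * norm c' / 2" using cr_bound[of "c u - c a" c'] by simp
    also have "\<dots> \<le> (B * (b - a)) * (2 * B) / 2"
    proof -
      have "norm (c u - c a) \<le> B * \<bar>u - a\<bar>" using Bc u01 ab unfolding lipB_def by auto
      also have "\<dots> \<le> B * (b - a)" using u B0 by (intro mult_left_mono) auto
      finally have 1: "norm (c u - c a) \<le> B * (b - a)" .
      have 2: "norm c' \<le> 2 * B" by (rule deriv_bound_vec[OF dc u01 Bc])
      show ?thesis using mult_mono[OF 1 2] B0 ab by (simp add: divide_right_mono)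
    qed
    also have "\<dots> = B * B * (b - a)" by simp
    finally show "\<exists>D. (gg has_real_derivative D) (at u within {a..b}) \<and> \<bar>D\<bar> \<le> B * B * (b - a)"
      using dg eq by metis
  qed
  then show ?thesis by (simp add: gg_def c_def z_def)
qed

lemma t_bound:
  assumes g: "\<gamma> \<in> curves p t"
  shows "t \<le> (norm p + R * lengthL Q \<gamma>) * (R * lengthL Q \<gamma>) / 2"
proof -
  define L where "L = lengthL Q \<gamma>"
  define H where "H = (norm p + R * L) * (R * L) / 2"
  have adm: "admissible \<gamma>" using g by (simp add: curves_def)
  obtain B N where B: "lipB B \<gamma>" and N: "negligible N"
    and der: "\<And>s. s \<in> {0..1} \<Longrightarrow> s \<notin> N \<Longrightarrow> \<exists>c' z'. ((\<lambda>u. proj_xy (\<gamma> u)) has_vector_derivative c') (at s within {0..1})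
        \<and> ((\<lambda>u. snd (snd (\<gamma> u))) has_real_derivative z') (at s within {0..1}) \<and> z' = cr (proj_xy (\<gamma> s)) c' / 2"
    using adm_dest[OF adm] by metis
  define c where "c u = proj_xy (\<gamma> u)" for u
  define z where "z u = snd (snd (\<gamma> u))" for u
  have z0: "z 0 = t" and z1: "z 1 = 0" using g by (auto simp: curves_def z_def)
  have L0: "0 \<le> L" using curve_len_lower[OF g] normL_nonneg[of "-p"] unfolding L_def by linarith
  have M0: "0 \<le> norm p + R * L" using L0 R_pos by simp
  have cb: "norm (c u) \<le> norm p + R * L" if "u \<in> {0..1}" for u
    using curve_c_bound[OF g that] by (simp add: c_def L_def)
  have main: "t \<le> H + B * B / real n" if n: "0 < n" for n :: nat
  proof -
    define tt where "tt i = real i / real n" for i :: nat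
    have pt: "part n tt" using n by (simp add: part_def tt_def divide_right_mono)
    have rng: "0 \<le> tt i" "tt i \<le> tt (Suc i)" "tt (Suc i) \<le> 1" if "i < n" for i
      using that n by (auto simp: tt_def divide_right_mono field_simps)
    define zeta where "zeta i = (z (tt (Suc i)) - cr (c (tt i)) (c (tt (Suc i))) / 2) - (z (tt i) - cr (c (tt i)) (c (tt i)) / 2)" for i
    have split: "z (tt (Suc i)) - z (tt i) = zeta i + cr (c (tt i)) (c (tt (Suc i))) / 2" for i
      by (simp add: zeta_def cr_def)
    have "(\<Sum>i<n. z (tt (Suc i)) - z (tt i)) = z (tt n) - z (tt 0)" by (rule sum_lessThan_telescope)
    also have "\<dots> = - t" using n z0 z1 by (simp add: tt_def)
    finally have "- t = (\<Sum>i<n. zeta i) + (\<Sum>i<n. cr (c (tt i)) (c (tt (Suc i))) / 2)"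
      by (simp add: split sum.distrib)
    then have "t \<le> \<bar>\<Sum>i<n. zeta i\<bar> + \<bar>\<Sum>i<n. cr (c (tt i)) (c (tt (Suc i))) / 2\<bar>" by linarith
    also have "\<bar>\<Sum>i<n. zeta i\<bar> \<le> B * B / real n"
    proof -
      have "\<bar>\<Sum>i<n. zeta i\<bar> \<le> (\<Sum>i<n. \<bar>zeta i\<bar>)" by (rule sum_abs)
      also have "\<dots> \<le> (\<Sum>i<n. (B * B * (1 / real n)) * (1 / real n))"
      proof (rule sum_mono)
        fix i assume i: "i \<in> {..<n}"
        have "\<bar>zeta i\<bar> \<le> (B * B * (tt (Suc i) - tt i)) * (tt (Suc i) - tt i)"
          unfolding zeta_def c_def z_def using rng[of i] i by (intro zeta_bound[OF g B N der]) auto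
        moreover have "tt (Suc i) - tt i = 1 / real n" by (simp add: tt_def add_divide_distrib)
        ultimately show "\<bar>zeta i\<bar> \<le> (B * B * (1 / real n)) * (1 / real n)" by simp
      qed
      also have "\<dots> = B * B / real n" using n by (simp add: field_simps power2_eq_square)
      finally show ?thesis .
    qed
    also have "\<bar>\<Sum>i<n. cr (c (tt i)) (c (tt (Suc i))) / 2\<bar> \<le> H"
    proof -
      have "\<bar>\<Sum>i<n. cr (c (tt i)) (c (tt (Suc i))) / 2\<bar> \<le> (\<Sum>i<n. \<bar>cr (c (tt i)) (c (tt (Suc i))) / 2\<bar>)" by (rule sum_abs)
      also have "\<dots> \<le> (\<Sum>i<n. (norm p + R * L) * R * normL Q (c (tt (Suc i)) - c (tt i)) / 2)"
      proof (rule sum_mono)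
        fix i assume i: "i \<in> {..<n}"
        have "cr (c (tt i)) (c (tt (Suc i))) = cr (c (tt i)) (c (tt (Suc i)) - c (tt i))" by (simp add: cr_def algebra_simps)
        then have "\<bar>cr (c (tt i)) (c (tt (Suc i)))\<bar> \<le> norm (c (tt i)) * norm (c (tt (Suc i)) - c (tt i))"
          using cr_bound by simp
        also have "\<dots> \<le> (norm p + R * L) * (R * normL Q (c (tt (Suc i)) - c (tt i)))"
        proof (rule mult_mono)
          show "norm (c (tt i)) \<le> norm p + R * L" using cb rng[of i] i by auto
          show "norm (c (tt (Suc i)) - c (tt i)) \<le> R * normL Q (c (tt (Suc i)) - c (tt i))"
            using normL_lower[of "c (tt (Suc i)) - c (tt i)"] R_pos by (simp add: field_simps)
        qed (use M0 in auto)
        finally show "\<bar>cr (c (tt i)) (c (tt (Suc i))) / 2\<bar> \<le> (norm p + R * L) * R * normL Q (c (tt (Suc i)) - c (tt i)) / 2"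
          by (simp add: mult.assoc)
      qed
      also have "\<dots> = (norm p + R * L) * R * psum Q c n tt / 2"
        by (simp add: psum_def sum_distrib_left sum_divide_distrib)
      also have "\<dots> \<le> (norm p + R * L) * R * L / 2"
      proof -
        have "psum Q c n tt \<le> L" using psum_le_length[OF B pt] unfolding L_def c_def[abs_def] by simp
        then show ?thesis using M0 R_pos by (intro divide_right_mono mult_left_mono) auto
      qed
      also have "\<dots> = H" by (simp add: H_def)
      finally show ?thesis .
    qed
    finally show ?thesis by simp
  qed
  show ?thesis
  proof (rule ccontr)
    assume "\<not> ?thesis"
    then have gap: "H < t" by (simp add: H_def L_def)
    obtain n :: nat where nn: "B * B / (t - H) < real n" using reals_Archimedean2 by blast
    have B2: "0 \<le> B * B" by simp
    have npos: "0 < n" using nn gap B2 by (metis divide_nonneg_pos diff_gt_0_iff_gt not_gr0 of_nat_0 order_le_less_trans less_irrefl)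
    have "B * B < real n * (t - H)" using nn gap by (simp add: divide_less_eq)
    then have "B * B / real n < t - H" using npos by (simp add: divide_less_eq mult.commute)
    then show False using main[OF npos] by simp
  qed
qed

end


context QL begin

lemma dCC_curves: "dCC Q (fst p, snd p, t) (0,0,0) = Inf (lengthL Q ` curves p t)"
  unfolding dCC_def curves_def by (rule arg_cong[where f=Inf]) auto

lemma curves_ne: assumes "0 \<le> t" shows "curves p t \<noteq> {}"
proof -
  obtain \<gamma> where "\<gamma> \<in> curves p 0" using seg by blast
  then obtain \<gamma>2 where "\<gamma>2 \<in> curves p (0 + t)" using perturb assms by blast
  then show ?thesis by auto
qed

lemma bdd_curves: "bdd_below (lengthL Q ` curves p t)"
proof (rule bdd_belowI[where m="normL Q (-p)"])
  fix l assume "l \<in> lengthL Q ` curves p t"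
  then obtain \<gamma> where "\<gamma> \<in> curves p t" "l = lengthL Q \<gamma>" by blast
  then show "normL Q (-p) \<le> l" using curve_len_lower by simp
qed

definition ff :: "real\<times>real \<Rightarrow> real \<Rightarrow> real" where "ff p t = Inf (lengthL Q ` curves p t)"

lemma ff_lower: assumes "0 \<le> t" shows "normL Q (-p) \<le> ff p t"
  unfolding ff_def
proof (rule cInf_greatest)
  show "lengthL Q ` curves p t \<noteq> {}" using curves_ne[OF assms] by simp
  fix l assume "l \<in> lengthL Q ` curves p t"
  then obtain \<gamma> where "\<gamma> \<in> curves p t" "l = lengthL Q \<gamma>" by blast
  then show "normL Q (-p) \<le> l" using curve_len_lower by simp
qed

lemma ff_le: "\<gamma> \<in> curves p t \<Longrightarrow> ff p t \<le> lengthL Q \<gamma>"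
  unfolding ff_def using bdd_curves by (intro cInf_lower) auto

lemma ff0: "ff p 0 = normL Q (-p)"
proof -
  obtain \<gamma> where g: "\<gamma> \<in> curves p 0" "lengthL Q \<gamma> \<le> normL Q (- p)" using seg by blast
  show ?thesis using ff_le[OF g(1)] g(2) ff_lower[of 0 p] by simp
qed

lemma ff_perturb: assumes "0 \<le> t" "0 \<le> \<delta>" shows "ff p (t + \<delta>) \<le> ff p t + 2 / \<rho> * sqrt (60 * \<delta>)"
proof -
  have "ff p (t + \<delta>) - 2 / \<rho> * sqrt (60 * \<delta>) \<le> ff p t"
    unfolding ff_def[of p t]
  proof (rule cInf_greatest)
    show "lengthL Q ` curves p t \<noteq> {}" using curves_ne[OF assms(1)] by simp
    fix l assume "l \<in> lengthL Q ` curves p t"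
    then obtain \<gamma> where g: "\<gamma> \<in> curves p t" and l: "l = lengthL Q \<gamma>" by blast
    obtain \<gamma>2 where g2: "\<gamma>2 \<in> curves p (t + \<delta>)" "lengthL Q \<gamma>2 \<le> lengthL Q \<gamma> + 2 / \<rho> * sqrt (60 * \<delta>)"
      using perturb[OF g assms(2)] by blast
    show "ff p (t + \<delta>) - 2 / \<rho> * sqrt (60 * \<delta>) \<le> l" using ff_le[OF g2(1)] g2(2) l by simp
  qed
  then show ?thesis by simp
qed

lemma ff_mono_strict:
  assumes t: "0 \<le> t" "t < t'"
  shows "ff p t \<le> ff p t'" "normL Q (-p) < ff p t' \<Longrightarrow> ff p t < ff p t'"
proof -
  define l0 where "l0 = normL Q (-p)"
  define Js where "Js = norm p * (norm p + R * (ff p t' + 1))"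
  define k where "k = (t' - t) / (2 * t' + Js)"
  have l0n: "0 \<le> l0" unfolding l0_def by (rule normL_nonneg)
  have fl: "l0 \<le> ff p t'" using ff_lower[of t' p] t unfolding l0_def by simp
  have Js0: "0 \<le> Js" unfolding Js_def using fl l0n R_pos by (intro mult_nonneg_nonneg add_nonneg_nonneg) auto
  have k0: "0 < k" unfolding k_def using t Js0 by (intro divide_pos_pos) auto
  have k1: "k \<le> 1" unfolding k_def using t Js0 by (simp add: divide_le_eq)
  have step: "ff p t \<le> (1 - k) * lengthL Q \<gamma> + k * l0" if g: "\<gamma> \<in> curves p t'" and lt: "lengthL Q \<gamma> < ff p t' + 1" for \<gamma>
  proof -
    define L where "L = lengthL Q \<gamma>"
    obtain \<gamma>2 where g2: "\<gamma>2 \<in> curves p t"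
      and le: "lengthL Q \<gamma>2 \<le> L - (t' - t) / (2 * t' + norm p * (norm p + R * L)) * (L - l0)"
      using interp[OF g t(1) less_imp_le[OF t(2)]] t unfolding L_def l0_def by force
    have Ll0: "l0 \<le> L" using curve_len_lower[OF g] unfolding L_def l0_def .
    have JJ: "norm p * (norm p + R * L) \<le> Js"
      unfolding Js_def using lt R_pos L_def by (intro mult_left_mono add_left_mono) auto
    have J0: "0 \<le> norm p * (norm p + R * L)" using Ll0 l0n R_pos by (intro mult_nonneg_nonneg add_nonneg_nonneg) auto
    have pos1: "0 < 2 * t' + Js" using t Js0 by simp
    have pos2: "0 < 2 * t' + norm p * (norm p + R * L)" using t J0 by simp
    have "k \<le> (t' - t) / (2 * t' + norm p * (norm p + R * L))"
      unfolding k_def using t JJ by (intro divide_left_mono mult_pos_pos pos1 pos2) auto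
    then have "k * (L - l0) \<le> (t' - t) / (2 * t' + norm p * (norm p + R * L)) * (L - l0)"
      using Ll0 by (intro mult_right_mono) auto
    then have "lengthL Q \<gamma>2 \<le> L - k * (L - l0)" using le by simp
    then show ?thesis using ff_le[OF g2] unfolding L_def by (simp add: algebra_simps)
  qed
  have main: "ff p t \<le> (1 - k) * ff p t' + k * l0"
  proof (rule ccontr)
    assume "\<not> ?thesis"
    then have D: "0 < ff p t - ((1 - k) * ff p t' + k * l0)" by simp
    define e where "e = min 1 ((ff p t - ((1 - k) * ff p t' + k * l0)) / 2)"
    have e0: "0 < e" unfolding e_def using D by simp
    have "Inf (lengthL Q ` curves p t') < ff p t' + e" using e0 by (simp add: ff_def)
    then obtain l where l: "l \<in> lengthL Q ` curves p t'" "l < ff p t' + e"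
      using cInf_lessD curves_ne[of t' p] t by (metis image_is_empty less_eq_real_def order_le_less_trans)
    then obtain \<gamma> where g: "\<gamma> \<in> curves p t'" and lg: "lengthL Q \<gamma> < ff p t' + e" by blast
    have "ff p t \<le> (1 - k) * lengthL Q \<gamma> + k * l0" using step[OF g] lg e_def by simp
    also have "\<dots> \<le> (1 - k) * (ff p t' + e) + k * l0" using lg k1 by (intro add_right_mono mult_left_mono) auto
    also have "\<dots> \<le> (1 - k) * ff p t' + k * l0 + e" using k0 e0 by (simp add: algebra_simps mult_left_le_one_le)
    also have "\<dots> < ff p t"
    proof -
      have "e \<le> (ff p t - ((1 - k) * ff p t' + k * l0)) / 2" unfolding e_def by (rule min.cobounded2)
      then have "e < ff p t - ((1 - k) * ff p t' + k * l0)" using D by (simp add: field_simps)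
      then have "(1 - k) * ff p t' + k * l0 + e < (1 - k) * ff p t' + k * l0 + (ff p t - ((1 - k) * ff p t' + k * l0))"
        by (rule add_strict_left_mono)
      then show ?thesis by simp
    qed
    finally show False by simp
  qed
  moreover have "k * l0 \<le> k * ff p t'" using fl k0 by (intro mult_left_mono) auto
  ultimately show "ff p t \<le> ff p t'" by (simp add: algebra_simps)
  show "ff p t < ff p t'" if "normL Q (-p) < ff p t'"
  proof -
    have "k * l0 < k * ff p t'" using that k0 unfolding l0_def by simp
    then show ?thesis using main by (simp add: algebra_simps)
  qed
qed

lemma ff_big:
  assumes "(norm p + R * (normL Q (-p) + 1)) * (R * (normL Q (-p) + 1)) / 2 < t"
  shows "normL Q (-p) + 1 \<le> ff p t"
proof -
  define l0 where "l0 = normL Q (-p)"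
  have l0n: "0 \<le> l0" unfolding l0_def by (rule normL_nonneg)
  have tpos: "0 \<le> t" using assms l0n R_pos unfolding l0_def[symmetric]
    by (smt (verit) divide_nonneg_pos mult_nonneg_nonneg norm_ge_zero)
  show ?thesis unfolding ff_def
  proof (rule cInf_greatest)
    show "lengthL Q ` curves p t \<noteq> {}" using curves_ne[OF tpos] by simp
    fix l assume "l \<in> lengthL Q ` curves p t"
    then obtain \<gamma> where g: "\<gamma> \<in> curves p t" and l: "l = lengthL Q \<gamma>" by blast
    have tb: "t \<le> (norm p + R * l) * (R * l) / 2" using t_bound[OF g] l by simp
    have l0l: "l0 \<le> l" using curve_len_lower[OF g] l unfolding l0_def by simp
    show "normL Q (-p) + 1 \<le> l"
    proof (rule ccontr)
      assume "\<not> ?thesis"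
      then have ll: "l < l0 + 1" unfolding l0_def by simp
      have "(norm p + R * l) * (R * l) / 2 \<le> (norm p + R * (l0 + 1)) * (R * (l0 + 1)) / 2"
        using ll l0l l0n R_pos by (intro divide_right_mono mult_mono add_left_mono mult_left_mono) auto
      then show False using tb assms unfolding l0_def by simp
    qed
  qed
qed

lemma main_QL:
  shows "continuous_on {0..} (ff p) \<and>
         (\<exists>T \<ge> 0. (\<forall>t\<in>{0..T}. ff p t = ff p T) \<and> strict_mono_on {T..} (ff p))"
proof -
  define l0 where "l0 = normL Q (-p)"
  define C where "C = 2 / \<rho> * sqrt 60"
  have C0: "0 \<le> C" unfolding C_def using rho by simp
  have diff: "\<bar>ff p b - ff p a\<bar> \<le> C * sqrt \<bar>b - a\<bar>" if "0 \<le> a" "a \<le> b" for a b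
  proof (cases "a = b")
    case True then show ?thesis by simp
  next
    case False
    then have ab: "a < b" using that by simp
    have 1: "ff p a \<le> ff p b" using ff_mono_strict(1)[OF that(1) ab] .
    have "ff p (a + (b - a)) \<le> ff p a + 2 / \<rho> * sqrt (60 * (b - a))" by (rule ff_perturb) (use that ab in auto)
    then have "ff p b \<le> ff p a + 2 / \<rho> * (sqrt 60 * sqrt (b - a))" by (simp only: real_sqrt_mult) simp
    then have 2: "ff p b \<le> ff p a + C * sqrt (b - a)" by (simp add: C_def mult.assoc)
    show ?thesis using 1 2 ab by simp
  qed
  have diff2: "\<bar>ff p b - ff p a\<bar> \<le> C * sqrt \<bar>b - a\<bar>" if "0 \<le> a" "0 \<le> b" for a b
  proof (cases "a \<le> b")
    case True then show ?thesis using diff that by simp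
  next
    case False then show ?thesis using diff[of b a] that by (simp add: abs_minus_commute)
  qed
  have cont: "continuous_on {0..} (ff p)"
    unfolding continuous_on_iff
  proof (intro ballI allI impI)
    fix x e :: real assume x: "x \<in> {0..}" and e: "0 < e"
    define d where "d = (e / (C + 1))^2"
    have d0: "0 < d" using e C0 by (simp add: d_def)
    show "\<exists>d>0. \<forall>x'\<in>{0..}. dist x' x < d \<longrightarrow> dist (ff p x') (ff p x) < e"
    proof (intro exI[of _ d] conjI ballI impI d0)
      fix x' assume x': "x' \<in> {0..}" and dd: "dist x' x < d"
      have "dist (ff p x') (ff p x) \<le> C * sqrt \<bar>x' - x\<bar>" using diff2[of x x'] x x' by (simp add: dist_real_def)
      also have "\<dots> \<le> C * sqrt d" using dd C0 by (intro mult_left_mono) (auto simp: dist_real_def)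
      also have "sqrt d = e / (C + 1)" using e C0 by (simp add: d_def)
      also have "C * (e / (C + 1)) < e" using e C0 by (simp add: field_simps)
      finally show "dist (ff p x') (ff p x) < e" .
    qed
  qed
  define H0 where "H0 = (norm p + R * (l0 + 1)) * (R * (l0 + 1)) / 2"
  define S where "S = {t \<in> {0..}. ff p t = l0}"
  have clS: "closed S" unfolding S_def by (intro continuous_closed_preimage_constant cont) auto
  have S0: "0 \<in> S" unfolding S_def using ff0 by (simp add: l0_def)
  have Sb: "t \<le> H0" if "t \<in> S" for t
  proof (rule ccontr)
    assume "\<not> t \<le> H0"
    then have "l0 + 1 \<le> ff p t" using ff_big[of p t] unfolding H0_def l0_def by simp
    then show False using that by (simp add: S_def)
  qed
  have bdS: "bdd_above S" using Sb by (intro bdd_aboveI) auto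
  define T where "T = Sup S"
  have TS: "T \<in> S" unfolding T_def using closed_contains_Sup[OF _ bdS clS] S0 by auto
  have T0: "0 \<le> T" using TS by (simp add: S_def)
  have fT: "ff p T = l0" using TS by (simp add: S_def)
  have flat: "\<forall>t\<in>{0..T}. ff p t = ff p T"
  proof
    fix t assume t: "t \<in> {0..T}"
    show "ff p t = ff p T"
    proof (cases "t = T")
      case False
      then have "t < T" using t by simp
      then have "ff p t \<le> ff p T" using ff_mono_strict(1) t by simp
      moreover have "l0 \<le> ff p t" using ff_lower t unfolding l0_def by simp
      ultimately show ?thesis using fT by simp
    qed simp
  qed
  have sm: "strict_mono_on {T..} (ff p)"
  proof (rule strict_mono_onI)
    fix a b assume a: "a \<in> {T..}" and b: "b \<in> {T..}" and ab: "a < b"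
    have "b \<notin> S"
    proof
      assume "b \<in> S"
      then have "b \<le> T" unfolding T_def using bdS by (rule cSup_upper)
      then show False using a ab by simp
    qed
    then have "ff p b \<noteq> l0" using b T0 by (simp add: S_def)
    moreover have "l0 \<le> ff p b" using ff_lower b T0 unfolding l0_def by simp
    ultimately have "l0 < ff p b" by simp
    then show "ff p a < ff p b" using ff_mono_strict(2)[of a b p] a ab T0 unfolding l0_def by simp
  qed
  show ?thesis using cont T0 flat sm by blast
qed

end


theorem mainTheorem17:
  fixes Q :: "(real \<times> real) set" and x y :: real
  assumes "polytope Q" and "compact Q" and "convex Q"
    and "\<And>v. v \<in> Q \<Longrightarrow> - v \<in> Q"
    and "interior Q \<noteq> {}"
  shows "continuous_on {0..} (\<lambda>t. dCC Q (x, y, t) (0, 0, 0)) \<and>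
         (\<exists>T \<ge> 0. (\<forall>t\<in>{0..T}. dCC Q (x, y, t) (0, 0, 0) = dCC Q (x, y, T) (0, 0, 0)) \<and>
                  strict_mono_on {T..} (\<lambda>t. dCC Q (x, y, t) (0, 0, 0)))"
proof -
  have "bounded Q" using assms(2) by (rule compact_imp_bounded)
  then obtain R where R0: "\<forall>x\<in>Q. norm x \<le> R" unfolding bounded_pos by blast
  then have R: "Q \<subseteq> cball 0 R" by (auto simp: subset_eq)
  obtain a where a: "a \<in> interior Q" using assms(5) by blast
  then obtain e where e: "0 < e" "ball a e \<subseteq> Q" using mem_interior by blast
  have ball0: "ball 0 e \<subseteq> Q"
  proof
    fix v :: "real \<times> real" assume v: "v \<in> ball 0 e"
    have 1: "a + v \<in> Q" using e v by (intro subsetD[OF e(2)]) (simp add: dist_norm)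
    have "a - v \<in> Q" using e v by (intro subsetD[OF e(2)]) (simp add: dist_norm)
    then have 2: "v - a \<in> Q" using assms(4)[of "a - v"] by simp
    have "(1/2) *\<^sub>R (a + v) + (1/2) *\<^sub>R (v - a) \<in> Q"
      by (rule convexD[OF assms(3) 1 2]) auto
    moreover have "(1/2) *\<^sub>R (a + v) + (1/2) *\<^sub>R (v - a) = v" by (simp add: algebra_simps scaleR_add_left[symmetric])
    ultimately show "v \<in> Q" by simp
  qed
  have "cball 0 (e/2) \<subseteq> ball 0 e" using e by (auto simp: subset_eq)
  then have "cball 0 (e/2) \<subseteq> Q" using ball0 by (rule order_trans)
  then interpret QL Q "e/2" R using e R assms(3) by (unfold_locales) auto
  have eq2: "dCC Q (x, y, t) (0, 0, 0) = ff (x, y) t" for t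
    using dCC_curves[of "(x, y)" t] by (simp add: ff_def)
  show ?thesis unfolding eq2 using main_QL[of "(x, y)"] by simp
qed


end
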